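(* Let $X$ be a Dedekind complete Riesz space with weak order unit $e$ and conditional expectation operator $T$ with $Te=e$, and assume $X$ is $T$-universally complete. Let $(P_{n})$ be a sequence of $T$-independent band projections in $X$. If $B$ is a band of $X^{u}$ such that $$\sum_{n\ge1}TP_{n}e=\infty_{B}+u\quad\text{with }u\in B^{d}\ (u\in X^u),$$ then the band projection $P_{B}$ commutes with $T$ and $P_{B}=\limsup_{n\to\infty}P_{n}$. In particular, if $\sum_{n\ge1}TP_{n}e=\infty$ then $\limsup_{n\to\infty}P_{n}=I$.
   Context: A conditional expectation operator on a Dedekind complete Riesz space $X$ with weak order unit $e$ is a strictly positive, order continuous linear projection $T$ with $Te=e$ whose range $R(T)$ is a Dedekind complete Riesz subspace. $X$ is $T$-universally complete if every increasing net $(x_\alpha)$ in $X$ with $(Tx_\alpha)$ order bounded in $X^u$ is order convergent in $X$. $X^{u}$ is the universal completion of $X$, an $f$-algebra with unit $e$. The sequence $(P_n)$ of band projections is $T$-independent if for all distinct indices $i_1,\dots,i_k$ and $Q_j\in\{P_{i_j},I-P_{i_j}\}$ one has $TQ_1\cdots Q_ke=\prod_{j=1}^{k}TQ_je$ (product in $X^{u}$). $\limsup_n P_n=\inf_n\sup_{k\ge n}P_k$ in the Boolean algebra of band projections. The sup-completion $X^{s}$ of $X$ is the lattice-ordered cone of classes of nonempty upward directed subsets of $X$ (with $A\sim B$ iff $\sup_{a\in A}(x\wedge a)=\sup_{b\in B}(x\wedge b)$ for all $x\in X$), containing $X$ and $X^u_+$, in which every nonempty set has a supremum; it has a greatest element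 $\infty$. Series of positive terms are interpreted as suprema of partial sums in $X^{s}$. For a band $B$, $\infty_B$ is the supremum of $B$ in $X^s$. Bands of $X$ and of $X^u$ are identified. *)

theory Defs
  imports Complex_Main "HOL-Library.Lattice_Algebras"
begin

text \<open>The ambient type 'u models the universal completion X^u of X.
  X itself is modelled as a subset of 'u (an order dense ideal).\<close>

class dc_riesz_space = ordered_real_vector + lattice_ab_group_add + conditionally_complete_lattice

definition rabs :: "'u::dc_riesz_space \<Rightarrow> 'u" where
  "rabs x = sup x (- x)"

definition disj :: "'u::dc_riesz_space \<Rightarrow> 'u \<Rightarrow> bool" where
  "disj x y \<longleftrightarrow> inf (rabs x) (rabs y) = 0"

definition dcompl :: "'u::dc_riesz_space set \<Rightarrow> 'u set" where
  "dcompl S = {x. \<forall>y\<in>S. disj x y}"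

definition is_ideal_in :: "'u::dc_riesz_space set \<Rightarrow> 'u set \<Rightarrow> bool" where
  "is_ideal_in V I \<longleftrightarrow> I \<subseteq> V \<and> 0 \<in> I \<and> (\<forall>x\<in>I. \<forall>y\<in>I. x + y \<in> I)
     \<and> (\<forall>c x. x \<in> I \<longrightarrow> c *\<^sub>R x \<in> I)
     \<and> (\<forall>x\<in>I. \<forall>y\<in>V. rabs y \<le> rabs x \<longrightarrow> y \<in> I)"

definition is_band :: "'u::dc_riesz_space set \<Rightarrow> bool" where
  "is_band B \<longleftrightarrow> is_ideal_in UNIV B \<and> (\<forall>A. A \<subseteq> B \<and> A \<noteq> {} \<and> bdd_above A \<longrightarrow> Sup A \<in> B)"

definition is_bp_onto :: "('u::dc_riesz_space \<Rightarrow> 'u) \<Rightarrow> 'u set \<Rightarrow> bool" where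
  "is_bp_onto P B \<longleftrightarrow> (\<forall>x. P x \<in> B \<and> x - P x \<in> dcompl B)"

definition band_proj :: "('u::dc_riesz_space \<Rightarrow> 'u) \<Rightarrow> bool" where
  "band_proj P \<longleftrightarrow> (\<exists>B. is_band B \<and> is_bp_onto P B)"

definition bproj :: "'u::dc_riesz_space set \<Rightarrow> ('u \<Rightarrow> 'u)" where
  "bproj B = (THE P. is_bp_onto P B)"

definition bp_le :: "('u::dc_riesz_space \<Rightarrow> 'u) \<Rightarrow> ('u \<Rightarrow> 'u) \<Rightarrow> bool" where
  "bp_le P Q \<longleftrightarrow> (\<forall>x. P (Q x) = P x)"

definition bp_Sup :: "('u::dc_riesz_space \<Rightarrow> 'u) set \<Rightarrow> ('u \<Rightarrow> 'u)" where
  "bp_Sup F = (THE Q. band_proj Q \<and> (\<forall>P\<in>F. bp_le P Q)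
      \<and> (\<forall>R. band_proj R \<and> (\<forall>P\<in>F. bp_le P R) \<longrightarrow> bp_le Q R))"

definition bp_Inf :: "('u::dc_riesz_space \<Rightarrow> 'u) set \<Rightarrow> ('u \<Rightarrow> 'u)" where
  "bp_Inf F = (THE Q. band_proj Q \<and> (\<forall>P\<in>F. bp_le Q P)
      \<and> (\<forall>R. band_proj R \<and> (\<forall>P\<in>F. bp_le R P) \<longrightarrow> bp_le R Q))"

definition bp_limsup :: "(nat \<Rightarrow> 'u::dc_riesz_space \<Rightarrow> 'u) \<Rightarrow> ('u \<Rightarrow> 'u)" where
  "bp_limsup P = bp_Inf (range (\<lambda>n. bp_Sup {P k | k. n \<le> k}))"

text \<open>Universal completeness of 'u: Dedekind complete (type class) and laterally complete.\<close>
definition laterally_complete :: "'u::dc_riesz_space itself \<Rightarrow> bool" where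
  "laterally_complete _ \<longleftrightarrow> (\<forall>D::'u set. (\<forall>x\<in>D. 0 \<le> x)
      \<and> (\<forall>x\<in>D. \<forall>y\<in>D. x \<noteq> y \<longrightarrow> inf x y = 0) \<longrightarrow> bdd_above D)"

definition is_universal_completion_of :: "'u::dc_riesz_space set \<Rightarrow> bool" where
  "is_universal_completion_of X \<longleftrightarrow> laterally_complete TYPE('u) \<and> is_ideal_in UNIV X
      \<and> (\<forall>v. 0 < v \<longrightarrow> (\<exists>x\<in>X. 0 < x \<and> x \<le> v))"

definition weak_order_unit :: "'u::dc_riesz_space set \<Rightarrow> 'u \<Rightarrow> bool" where
  "weak_order_unit X e \<longleftrightarrow> e \<in> X \<and> 0 \<le> e \<and> (\<forall>x\<in>X. inf (rabs x) e = 0 \<longrightarrow> x = 0)"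

definition f_algebra_unit :: "('u::dc_riesz_space \<Rightarrow> 'u \<Rightarrow> 'u) \<Rightarrow> 'u \<Rightarrow> bool" where
  "f_algebra_unit mult e \<longleftrightarrow>
     (\<forall>x y z. mult x (y + z) = mult x y + mult x z \<and> mult (x + y) z = mult x z + mult y z)
   \<and> (\<forall>c x y. mult (c *\<^sub>R x) y = c *\<^sub>R mult x y \<and> mult x (c *\<^sub>R y) = c *\<^sub>R mult x y)
   \<and> (\<forall>x y z. mult (mult x y) z = mult x (mult y z))
   \<and> (\<forall>x y. 0 \<le> x \<and> 0 \<le> y \<longrightarrow> 0 \<le> mult x y)
   \<and> (\<forall>x y z. inf x y = 0 \<and> 0 \<le> z \<longrightarrow> inf (mult z x) y = 0 \<and> inf (mult x z) y = 0)
   \<and> (\<forall>x. mult e x = x \<and> mult x e = x)"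

definition cond_exp :: "'u::dc_riesz_space set \<Rightarrow> ('u \<Rightarrow> 'u) \<Rightarrow> 'u \<Rightarrow> bool" where
  "cond_exp X T e \<longleftrightarrow>
     (\<forall>x\<in>X. T x \<in> X)
   \<and> (\<forall>x\<in>X. \<forall>y\<in>X. T (x + y) = T x + T y)
   \<and> (\<forall>c. \<forall>x\<in>X. T (c *\<^sub>R x) = c *\<^sub>R T x)
   \<and> (\<forall>x\<in>X. 0 \<le> x \<longrightarrow> 0 \<le> T x)
   \<and> (\<forall>x\<in>X. 0 < x \<longrightarrow> 0 < T x)
   \<and> (\<forall>D. D \<subseteq> X \<and> D \<noteq> {} \<and> (\<forall>x\<in>D. \<forall>y\<in>D. \<exists>z\<in>D. z \<le> x \<and> z \<le> y)
        \<and> (\<forall>x\<in>D. 0 \<le> x) \<and> Inf D = 0 \<longrightarrow> Inf (T ` D) = 0)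
   \<and> (\<forall>x\<in>X. T (T x) = T x)
   \<and> T e = e
   \<and> (\<forall>x\<in>T ` X. \<forall>y\<in>T ` X. sup x y \<in> T ` X)
   \<and> (\<forall>A. A \<subseteq> T ` X \<and> A \<noteq> {} \<and> (\<exists>b\<in>T ` X. \<forall>a\<in>A. a \<le> b) \<longrightarrow>
        (\<exists>s\<in>T ` X. (\<forall>a\<in>A. a \<le> s) \<and> (\<forall>b\<in>T ` X. (\<forall>a\<in>A. a \<le> b) \<longrightarrow> s \<le> b)))"

text \<open>X is T-universally complete.  An increasing net is represented by its range,
  an upward directed subset D of X; order convergence of an increasing net in X
  means existence of its supremum in X.\<close>
definition T_univ_complete :: "'u::dc_riesz_space set \<Rightarrow> ('u \<Rightarrow> 'u) \<Rightarrow> bool" where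
  "T_univ_complete X T \<longleftrightarrow>
     (\<forall>D. D \<subseteq> X \<and> D \<noteq> {} \<and> (\<forall>x\<in>D. \<forall>y\<in>D. \<exists>z\<in>D. x \<le> z \<and> y \<le> z)
        \<and> (\<exists>l w. \<forall>d\<in>D. l \<le> T d \<and> T d \<le> w) \<longrightarrow>
        (\<exists>s\<in>X. (\<forall>d\<in>D. d \<le> s) \<and> (\<forall>t\<in>X. (\<forall>d\<in>D. d \<le> t) \<longrightarrow> s \<le> t)))"

definition T_indep :: "('u::dc_riesz_space \<Rightarrow> 'u) \<Rightarrow> ('u \<Rightarrow> 'u \<Rightarrow> 'u) \<Rightarrow> 'u \<Rightarrow> (nat \<Rightarrow> 'u \<Rightarrow> 'u) \<Rightarrow> bool" where
  "T_indep T mult e P \<longleftrightarrow>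
     (\<forall>is c. distinct is \<and> is \<noteq> [] \<longrightarrow>
        (let Q = (\<lambda>i. if c i then P i else (\<lambda>x. x - P i x)) in
          T (foldr (\<lambda>i f. Q i \<circ> f) is id e) = foldr (\<lambda>i a. mult (T (Q i e)) a) is e))"

text \<open>Equivalence of (nonempty, upward directed) subsets of X defining equality in the
  sup-completion X^s.\<close>
definition sc_equiv :: "'u::dc_riesz_space set \<Rightarrow> 'u set \<Rightarrow> 'u set \<Rightarrow> bool" where
  "sc_equiv X A C \<longleftrightarrow> (\<forall>x\<in>X. Sup ((\<lambda>a. inf x a) ` A) = Sup ((\<lambda>c. inf x c) ` C))"

text \<open>Representatives in X^s: the series (sup of partial sums), the element
  \<infinity>_B + u (B band, u in X^u_+), and \<infinity>.\<close>
definition series_rep :: "(nat \<Rightarrow> 'u::dc_riesz_space) \<Rightarrow> 'u set" where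
  "series_rep f = range (\<lambda>N. \<Sum>n<N. f n)"

definition inftyB_plus_rep :: "'u::dc_riesz_space set \<Rightarrow> 'u set \<Rightarrow> 'u \<Rightarrow> 'u set" where
  "inftyB_plus_rep X B u = {b + y | b y. b \<in> X \<inter> B \<and> 0 \<le> b \<and> y \<in> X \<and> 0 \<le> y \<and> y \<le> u}"

definition infty_rep :: "'u::dc_riesz_space set \<Rightarrow> 'u set" where
  "infty_rep X = {x \<in> X. 0 \<le> x}"

end

theory Submission
  imports Defs
begin



lemma rabs_nonneg: "0 \<le> rabs (x::'u::dc_riesz_space)"
proof -
  have "x + - x \<le> sup x (-x) + sup x (-x)" by (intro add_mono) auto
  then show ?thesis unfolding rabs_def by simp
qed

lemma rabs_pos: "0 \<le> (x::'u::dc_riesz_space) \<Longrightarrow> rabs x = x"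
  unfolding rabs_def by (metis neg_le_0_iff_le order_trans sup.absorb1)

lemma rabs_zero_iff: "rabs (x::'u::dc_riesz_space) = 0 \<longleftrightarrow> x = 0"
  unfolding rabs_def by simp

lemma rabs_0[simp]: "rabs (0::'u::dc_riesz_space) = 0"
  by (simp add: rabs_zero_iff)

lemma rabs_neg: "rabs (- (x::'u::dc_riesz_space)) = rabs x"
  unfolding rabs_def by (simp add: sup.commute)

lemma le_rabs: "(x::'u::dc_riesz_space) \<le> rabs x" "- x \<le> rabs x"
  unfolding rabs_def by auto

lemma rabs_le_iff: "rabs (x::'u::dc_riesz_space) \<le> a \<longleftrightarrow> x \<le> a \<and> - x \<le> a"
  unfolding rabs_def by simp

lemma rabs_triangle: "rabs ((x::'u::dc_riesz_space) + y) \<le> rabs x + rabs y"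
proof -
  have "x + y \<le> rabs x + rabs y" using le_rabs(1)[of x] le_rabs(1)[of y] by (rule add_mono)
  moreover have "- x + - y \<le> rabs x + rabs y" using le_rabs(2)[of x] le_rabs(2)[of y] by (rule add_mono)
  ultimately show ?thesis unfolding rabs_le_iff by (simp add: add.commute)
qed

lemma inf_add_le:
  fixes a b c :: "'u::dc_riesz_space"
  assumes "0 \<le> a" "0 \<le> b" "0 \<le> c"
  shows "inf (a + b) c \<le> inf a c + inf b c"
proof -
  have "inf a c + inf b c = inf (inf (a + b) (a + c)) (inf (c + b) (c + c))"
    by (simp add: add_inf_distrib_left add_inf_distrib_right inf_assoc inf.left_commute)
  moreover have "inf (a + b) c \<le> inf (inf (a + b) (a + c)) (inf (c + b) (c + c))"
    using assms by (auto intro: le_infI2 add_increasing add_increasing2)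
  ultimately show ?thesis by simp
qed

lemma scaleR_inf_pos:
  fixes a b :: "'u::dc_riesz_space"
  assumes c: "0 < c"
  shows "c *\<^sub>R inf a b = inf (c *\<^sub>R a) (c *\<^sub>R b)"
proof (rule antisym)
  show "c *\<^sub>R inf a b \<le> inf (c *\<^sub>R a) (c *\<^sub>R b)"
    using c by (auto intro: scaleR_left_mono)
  define z where "z = inf (c *\<^sub>R a) (c *\<^sub>R b)"
  have ic: "0 \<le> inverse c" using c by simp
  have "inverse c *\<^sub>R z \<le> inverse c *\<^sub>R (c *\<^sub>R a)"
    using ic unfolding z_def by (intro scaleR_left_mono) auto
  moreover have "inverse c *\<^sub>R (c *\<^sub>R a) = a" using c by simp
  moreover have "inverse c *\<^sub>R z \<le> inverse c *\<^sub>R (c *\<^sub>R b)"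
    using ic unfolding z_def by (intro scaleR_left_mono) auto
  moreover have "inverse c *\<^sub>R (c *\<^sub>R b) = b" using c by simp
  ultimately have "inverse c *\<^sub>R z \<le> inf a b" by simp
  then have "c *\<^sub>R (inverse c *\<^sub>R z) \<le> c *\<^sub>R inf a b"
    using c by (intro scaleR_left_mono) auto
  moreover have "c *\<^sub>R (inverse c *\<^sub>R z) = z" using c by simp
  ultimately show "z \<le> c *\<^sub>R inf a b" by simp
qed

lemma scaleR_sup_pos:
  fixes a b :: "'u::dc_riesz_space"
  assumes "0 < c"
  shows "c *\<^sub>R sup a b = sup (c *\<^sub>R a) (c *\<^sub>R b)"
proof -
  have "c *\<^sub>R sup a b = - (c *\<^sub>R inf (-a) (-b))"
    by (simp only: sup_eq_neg_inf[of a b] scaleR_minus_right)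
  also have "\<dots> = - inf (- (c *\<^sub>R a)) (- (c *\<^sub>R b))"
    using assms by (simp only: scaleR_inf_pos scaleR_minus_right)
  also have "\<dots> = sup (c *\<^sub>R a) (c *\<^sub>R b)"
    by (simp only: neg_inf_eq_sup minus_minus)
  finally show ?thesis .
qed

lemma rabs_scaleR: "rabs (c *\<^sub>R (x::'u::dc_riesz_space)) = \<bar>c\<bar> *\<^sub>R rabs x"
proof (cases "c = 0")
  case True then show ?thesis by simp
next
  case False
  show ?thesis
  proof (cases "c > 0")
    case True then show ?thesis unfolding rabs_def by (simp add: scaleR_sup_pos)
  next
    case False
    then have "-c > 0" using \<open>c \<noteq> 0\<close> by simp
    then have "rabs ((-c) *\<^sub>R (-x)) = (-c) *\<^sub>R rabs (-x)"
      unfolding rabs_def by (simp only: scaleR_sup_pos scaleR_minus_right)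
    moreover have "(-c) *\<^sub>R (-x) = c *\<^sub>R x" by simp
    moreover have "\<bar>c\<bar> = - c" using False by simp
    ultimately show ?thesis by (simp add: rabs_neg)
  qed
qed

lemma disj_sym: "disj x y \<longleftrightarrow> disj y (x::'u::dc_riesz_space)"
  unfolding disj_def by (simp add: inf.commute)

lemma disj_0[simp]: "disj 0 (y::'u::dc_riesz_space)"
  unfolding disj_def using rabs_nonneg[of y] by (simp add: inf_absorb1)

lemma disj_self: "disj x (x::'u::dc_riesz_space) \<Longrightarrow> x = 0"
  unfolding disj_def by (simp add: rabs_zero_iff)

lemma disj_pos: "0 \<le> x \<Longrightarrow> 0 \<le> y \<Longrightarrow> disj x (y::'u::dc_riesz_space) \<longleftrightarrow> inf x y = 0"
  unfolding disj_def by (simp add: rabs_pos)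

lemma dj_mono: "disj x y \<Longrightarrow> rabs z \<le> rabs x \<Longrightarrow> disj z (y::'u::dc_riesz_space)"
proof -
  assume a: "disj x y" "rabs z \<le> rabs x"
  have "inf (rabs z) (rabs y) \<le> inf (rabs x) (rabs y)" using a(2) by (rule inf_mono) simp
  moreover have "0 \<le> inf (rabs z) (rabs y)" using rabs_nonneg[of z] rabs_nonneg[of y] by simp
  ultimately show ?thesis using a(1) unfolding disj_def by simp
qed

lemma disj_add: "disj x z \<Longrightarrow> disj y z \<Longrightarrow> disj (x + y) (z::'u::dc_riesz_space)"
proof -
  assume a: "disj x z" "disj y z"
  have "inf (rabs (x+y)) (rabs z) \<le> inf (rabs x + rabs y) (rabs z)"
    using rabs_triangle[of x y] by (rule inf_mono) simp
  also have "\<dots> \<le> inf (rabs x) (rabs z) + inf (rabs y) (rabs z)"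
    by (intro inf_add_le rabs_nonneg)
  also have "\<dots> = 0" using a unfolding disj_def by simp
  finally show ?thesis unfolding disj_def
    by (simp add: antisym rabs_nonneg)
qed

lemma disj_neg: "disj (- x) y \<longleftrightarrow> disj x (y::'u::dc_riesz_space)"
  unfolding disj_def by (simp add: rabs_neg)

lemma disj_diff: "disj x z \<Longrightarrow> disj y z \<Longrightarrow> disj (x - y) (z::'u::dc_riesz_space)"
  using disj_add[of x z "-y"] disj_neg[of y z] by simp

lemma disj_scale: "disj x y \<Longrightarrow> disj (c *\<^sub>R x) (y::'u::dc_riesz_space)"
proof -
  assume a: "disj x y"
  define k where "k = max \<bar>c\<bar> 1"
  have k: "k > 0" "\<bar>c\<bar> \<le> k" "1 \<le> k" unfolding k_def by auto
  have "inf (rabs (c *\<^sub>R x)) (rabs y) \<le> inf (k *\<^sub>R rabs x) (k *\<^sub>R rabs y)"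
  proof (intro inf_mono)
    show "rabs (c *\<^sub>R x) \<le> k *\<^sub>R rabs x" unfolding rabs_scaleR
      using k by (intro scaleR_right_mono rabs_nonneg) 
    show "rabs y \<le> k *\<^sub>R rabs y"
      using k rabs_nonneg[of y] scaleR_right_mono[of 1 k "rabs y"] by simp
  qed
  also have "\<dots> = k *\<^sub>R inf (rabs x) (rabs y)" using k by (simp add: scaleR_inf_pos)
  also have "\<dots> = 0" using a unfolding disj_def by simp
  finally show ?thesis unfolding disj_def
    by (simp add: antisym rabs_nonneg)
qed

lemma archimedean_zero:
  fixes g M :: "'u::dc_riesz_space"
  assumes "0 \<le> g" "\<And>n::nat. real n *\<^sub>R g \<le> M"
  shows "g = 0"
proof -
  define S where "S = range (\<lambda>n::nat. real n *\<^sub>R g)"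
  have bdd: "bdd_above S" unfolding S_def using assms(2) by (intro bdd_aboveI[of _ M]) auto
  have ne: "S \<noteq> {}" unfolding S_def by auto
  have "\<And>n::nat. real n *\<^sub>R g \<le> Sup S - g"
  proof -
    fix n :: nat
    have m: "real (Suc n) *\<^sub>R g \<in> S" unfolding S_def by (rule rangeI)
    have "real (Suc n) *\<^sub>R g \<le> Sup S" by (rule cSup_upper[OF m bdd])
    then show "real n *\<^sub>R g \<le> Sup S - g" by (simp add: algebra_simps)
  qed
  then have "Sup S \<le> Sup S - g" using ne unfolding S_def by (intro cSup_least) auto
  then have "g \<le> 0" by simp
  then show ?thesis using assms(1) by simp
qed

lemma inf_Sup_distrib:
  fixes a :: "'u::dc_riesz_space"
  assumes ne: "A \<noteq> {}" and bdd: "bdd_above A"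
  shows "inf a (Sup A) = Sup ((\<lambda>x. inf a x) ` A)"
proof (rule antisym)
  define s where "s = Sup ((\<lambda>x. inf a x) ` A)"
  have bdd2: "bdd_above ((\<lambda>x. inf a x) ` A)"
    by (rule bdd_aboveI[of _ a]) auto
  have "\<And>x. x \<in> A \<Longrightarrow> x \<le> s + sup a (Sup A) - a"
  proof -
    fix x assume x: "x \<in> A"
    have "inf a x \<le> s" unfolding s_def using x bdd2 by (intro cSup_upper) auto
    moreover have "sup a x \<le> sup a (Sup A)" using x bdd by (intro sup_mono cSup_upper) auto
    ultimately have "inf a x + sup a x \<le> s + sup a (Sup A)" by (rule add_mono)
    moreover have "inf a x + sup a x = a + x" by (subst add_eq_inf_sup[of a x]) (rule add.commute)
    ultimately show "x \<le> s + sup a (Sup A) - a" by (simp add: algebra_simps)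
  qed
  then have "Sup A \<le> s + sup a (Sup A) - a" using ne by (intro cSup_least) auto
  then have h: "a + Sup A \<le> s + sup a (Sup A)" by (simp add: algebra_simps)
  have eq: "inf a (Sup A) + sup a (Sup A) = a + Sup A" by (subst add_eq_inf_sup[of a "Sup A"]) (rule add.commute)
  have "inf a (Sup A) + sup a (Sup A) \<le> s + sup a (Sup A)" using h by (simp only: eq)
  then show "inf a (Sup A) \<le> s" by simp
  show "s \<le> inf a (Sup A)" unfolding s_def
  proof (rule cSup_least)
    show "(\<lambda>x. inf a x) ` A \<noteq> {}" using ne by simp
    fix y assume "y \<in> (\<lambda>x. inf a x) ` A"
    then obtain x where x: "x \<in> A" "y = inf a x" by auto
    have "x \<le> Sup A" using x(1) bdd by (rule cSup_upper)
    then have "inf a x \<le> inf a (Sup A)" by (rule inf_mono[OF order_refl])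
    then show "y \<le> inf a (Sup A)" using x(2) by simp
  qed
qed




section \<open>Bands\<close>

context
  fixes B :: "'u::dc_riesz_space set"
  assumes B: "is_band B"
begin

lemma band_0: "0 \<in> B" using B unfolding is_band_def is_ideal_in_def by auto
lemma band_add: "x \<in> B \<Longrightarrow> y \<in> B \<Longrightarrow> x + y \<in> B" using B unfolding is_band_def is_ideal_in_def by auto
lemma band_scale: "x \<in> B \<Longrightarrow> c *\<^sub>R x \<in> B" using B unfolding is_band_def is_ideal_in_def by auto
lemma band_solid: "x \<in> B \<Longrightarrow> rabs y \<le> rabs x \<Longrightarrow> y \<in> B" using B unfolding is_band_def is_ideal_in_def by auto
lemma band_Sup: "A \<subseteq> B \<Longrightarrow> A \<noteq> {} \<Longrightarrow> bdd_above A \<Longrightarrow> Sup A \<in> B" using B unfolding is_band_def by auto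
lemma band_neg: "x \<in> B \<Longrightarrow> - x \<in> B" using band_scale[of x "-1"] by simp
lemma band_diff: "x \<in> B \<Longrightarrow> y \<in> B \<Longrightarrow> x - y \<in> B" using band_add[of x "-y"] band_neg[of y] by simp
lemma band_pos_le: "x \<in> B \<Longrightarrow> 0 \<le> y \<Longrightarrow> y \<le> x \<Longrightarrow> y \<in> B"
  by (rule band_solid) (auto simp: rabs_pos)
lemma band_rabs: "x \<in> B \<Longrightarrow> rabs x \<in> B"
  by (rule band_solid) (auto simp: rabs_pos rabs_nonneg)

end

lemma rabs_pprt_le: "rabs (sup x 0) \<le> rabs (x::'u::dc_riesz_space)"
  by (simp add: rabs_pos) (simp add: rabs_def rabs_nonneg[of x, unfolded rabs_def] le_supI1)

lemma rabs_nprt_le: "rabs (inf x 0) \<le> rabs (x::'u::dc_riesz_space)"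
proof -
  have e: "- inf x 0 = sup (- x) 0" by (simp add: neg_inf_eq_sup)
  have "rabs (inf x 0) = rabs (sup (- x) 0)" by (metis e rabs_neg)
  also have "\<dots> \<le> rabs (- x)" by (rule rabs_pprt_le)
  finally show ?thesis by (simp add: rabs_neg)
qed

lemma sup_Sup_const:
  fixes c :: "'u::dc_riesz_space"
  assumes ne: "A \<noteq> {}" and bdd: "bdd_above A"
  shows "sup (Sup A) c = Sup ((\<lambda>a. sup a c) ` A)"
proof (rule antisym)
  obtain M where M: "\<And>x. x \<in> A \<Longrightarrow> x \<le> M" using bdd by (auto simp: bdd_above_def)
  have bdd2: "bdd_above ((\<lambda>a. sup a c) ` A)"
    by (rule bdd_aboveI[of _ "sup M c"]) (auto intro: sup_mono M)
  obtain a0 where a0: "a0 \<in> A" using ne by auto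
  show "sup (Sup A) c \<le> Sup ((\<lambda>a. sup a c) ` A)"
  proof (rule sup_least)
    show "Sup A \<le> Sup ((\<lambda>a. sup a c) ` A)"
    proof (rule cSup_least[OF ne])
      fix x assume "x \<in> A"
      then have "sup x c \<le> Sup ((\<lambda>a. sup a c) ` A)" using bdd2 by (intro cSup_upper) auto
      then show "x \<le> Sup ((\<lambda>a. sup a c) ` A)" by simp
    qed
    have "sup a0 c \<le> Sup ((\<lambda>a. sup a c) ` A)" using bdd2 a0 by (intro cSup_upper) auto
    then show "c \<le> Sup ((\<lambda>a. sup a c) ` A)" by simp
  qed
  show "Sup ((\<lambda>a. sup a c) ` A) \<le> sup (Sup A) c"
  proof (rule cSup_least)
    show "(\<lambda>a. sup a c) ` A \<noteq> {}" using ne by simp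
    fix y assume "y \<in> (\<lambda>a. sup a c) ` A"
    then obtain x where x: "x \<in> A" "y = sup x c" by auto
    have "x \<le> Sup A" using x(1) bdd by (rule cSup_upper)
    then show "y \<le> sup (Sup A) c" using x(2) by (simp add: le_supI1)
  qed
qed

lemma dcompl_band: "is_band (dcompl (S::'u::dc_riesz_space set))"
proof -
  have ideal: "is_ideal_in UNIV (dcompl S)"
    unfolding is_ideal_in_def dcompl_def
    by (auto intro: disj_add disj_scale dj_mono)
  have "Sup A \<in> dcompl S" if A: "A \<subseteq> dcompl S" "A \<noteq> {}" "bdd_above A" for A
  proof -
    obtain a0 where a0: "a0 \<in> A" using A by auto
    define s where "s = Sup A"
    have "disj s y" if y: "y \<in> S" for y
    proof -
      define r where "r = rabs y"
      have r0: "0 \<le> r" unfolding r_def by (rule rabs_nonneg)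
      have dA: "inf (rabs a) r = 0" if "a \<in> A" for a
        using A(1) that y unfolding dcompl_def disj_def r_def by auto
      have "inf r (sup s 0) = Sup ((\<lambda>x. inf r x) ` ((\<lambda>a. sup a 0) ` A))"
        unfolding s_def sup_Sup_const[OF A(2,3)]
      proof (rule inf_Sup_distrib)
        show "(\<lambda>a. sup a 0) ` A \<noteq> {}" using A(2) by simp
        obtain M where M: "\<And>x. x \<in> A \<Longrightarrow> x \<le> M" using A(3) by (auto simp: bdd_above_def)
        show "bdd_above ((\<lambda>a. sup a 0) ` A)"
          by (rule bdd_aboveI[of _ "sup M 0"]) (auto intro: sup_mono M)
      qed
      also have "(\<lambda>x. inf r x) ` ((\<lambda>a. sup a 0) ` A) = {0}"
      proof -
        have "inf r (sup a 0) = 0" if "a \<in> A" for a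
        proof -
          have "sup a 0 \<le> rabs a" using rabs_pprt_le[of a] by (simp add: rabs_pos)
          then have "inf r (sup a 0) \<le> inf r (rabs a)" by (rule inf_mono[OF order_refl])
          also have "\<dots> = 0" using dA[OF that] by (simp add: inf.commute)
          finally show ?thesis using r0 by (simp add: antisym)
        qed
        then show ?thesis using A(2) by (force simp: image_image)
      qed
      finally have p: "inf r (sup s 0) = 0" by simp
      have "sup (- s) 0 \<le> sup (- a0) 0"
        using cSup_upper[OF a0 A(3)] unfolding s_def by (intro sup_mono) auto
      also have "\<dots> \<le> rabs a0"
        using rabs_pprt_le[of "-a0"] by (simp add: rabs_pos rabs_neg)
      finally have "inf r (sup (- s) 0) \<le> inf r (rabs a0)" by (rule inf_mono[OF order_refl])
      also have "\<dots> = 0" using dA[OF a0] by (simp add: inf.commute)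
      finally have n: "inf r (sup (- s) 0) = 0" using r0 by (simp add: antisym)
      have "rabs s \<le> sup s 0 + sup (- s) 0"
        unfolding rabs_le_iff
        by (auto intro: add_increasing add_increasing2 le_supI1)
      then have "inf (rabs s) r \<le> inf (sup s 0 + sup (- s) 0) r" by (rule inf_mono[OF _ order_refl])
      also have "\<dots> \<le> inf (sup s 0) r + inf (sup (- s) 0) r"
        using r0 by (intro inf_add_le) auto
      also have "\<dots> = 0" using p n by (simp add: inf.commute)
      finally show ?thesis unfolding disj_def r_def
        using rabs_nonneg[of s] rabs_nonneg[of y] by (simp add: antisym)
    qed
    then show ?thesis unfolding dcompl_def s_def by auto
  qed
  then show ?thesis using ideal unfolding is_band_def by auto
qed

lemma dcompl_mono: "S \<subseteq> S' \<Longrightarrow> dcompl S' \<subseteq> dcompl S"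
  unfolding dcompl_def by auto

lemma subset_ddcompl: "S \<subseteq> dcompl (dcompl S)"
  unfolding dcompl_def using disj_sym by auto

lemma dcompl_ddd: "dcompl (dcompl (dcompl S)) = dcompl S"
  by (meson antisym dcompl_mono subset_ddcompl)

lemma band_inter_dcompl: "x \<in> S \<Longrightarrow> x \<in> dcompl S \<Longrightarrow> x = (0::'u::dc_riesz_space)"
  unfolding dcompl_def using disj_self by auto

section \<open>Existence of band projections\<close>

definition pp :: "'u::dc_riesz_space set \<Rightarrow> 'u \<Rightarrow> 'u" where
  "pp B x = Sup {y \<in> B. 0 \<le> y \<and> y \<le> x}"

lemma pp_props:
  fixes B :: "'u::dc_riesz_space set"
  assumes B: "is_band B" and x: "0 \<le> x"
  shows "pp B x \<in> B" "0 \<le> pp B x" "pp B x \<le> x" "x - pp B x \<in> dcompl B"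
proof -
  define Y where "Y = {y \<in> B. 0 \<le> y \<and> y \<le> x}"
  have Y0: "0 \<in> Y" unfolding Y_def using band_0[OF B] x by auto
  have Yne: "Y \<noteq> {}" using Y0 by auto
  have Ybdd: "bdd_above Y" unfolding Y_def by (auto intro: bdd_aboveI[of _ x])
  show p1: "pp B x \<in> B" unfolding pp_def Y_def[symmetric]
    by (rule band_Sup[OF B]) (use Yne Ybdd in \<open>auto simp: Y_def\<close>)
  show p2: "0 \<le> pp B x" unfolding pp_def Y_def[symmetric] using Y0 Ybdd by (rule cSup_upper)
  show p3: "pp B x \<le> x" unfolding pp_def Y_def[symmetric] using Yne by (rule cSup_least) (auto simp: Y_def)
  show "x - pp B x \<in> dcompl B"
    unfolding dcompl_def
  proof safe
    fix b assume b: "b \<in> B"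
    define w where "w = inf (x - pp B x) (rabs b)"
    have w0: "0 \<le> w" unfolding w_def using p3 rabs_nonneg[of b] by simp
    have wB: "w \<in> B"
      by (rule band_pos_le[OF B band_rabs[OF B b] w0]) (simp add: w_def)
    have "w \<le> x - pp B x" unfolding w_def by simp
    then have "pp B x + w \<le> x" by (simp add: le_diff_eq add.commute)
    moreover have "0 \<le> pp B x + w" using p2 w0 by simp
    ultimately have "pp B x + w \<in> Y"
      unfolding Y_def using band_add[OF B p1 wB] by simp
    then have "pp B x + w \<le> pp B x" unfolding pp_def Y_def[symmetric] using Ybdd by (rule cSup_upper)
    then have "w = 0" using w0 by simp
    then show "disj (x - pp B x) b" unfolding disj_def w_def using p3 by (simp add: rabs_pos)
  qed
qed

lemma pp_0: "is_band B \<Longrightarrow> pp B 0 = 0"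
  using pp_props[of B 0] by simp

definition bpc :: "'u::dc_riesz_space set \<Rightarrow> 'u \<Rightarrow> 'u" where
  "bpc B x = pp B (sup x 0) - pp B (- inf x 0)"

lemma bpc_onto:
  fixes B :: "'u::dc_riesz_space set"
  assumes B: "is_band B"
  shows "is_bp_onto (bpc B) B"
  unfolding is_bp_onto_def
proof safe
  fix x :: 'u
  have a: "0 \<le> sup x 0" by (rule sup.cobounded2)
  have b: "0 \<le> - inf x 0" by (simp only: neg_0_le_iff_le inf.cobounded2)
  show "bpc B x \<in> B" unfolding bpc_def
    using pp_props(1)[OF B a] pp_props(1)[OF B b] by (rule band_diff[OF B])
  have "x - bpc B x = (sup x 0 - pp B (sup x 0)) - ((- inf x 0) - pp B (- inf x 0))"
    unfolding bpc_def using add_eq_inf_sup[of x 0] by (simp add: algebra_simps)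
  also have "\<dots> \<in> dcompl B"
    using pp_props(4)[OF B a] pp_props(4)[OF B b] by (rule band_diff[OF dcompl_band])
  finally show "x - bpc B x \<in> dcompl B" .
qed

lemma bp_onto_unique:
  fixes B :: "'u::dc_riesz_space set"
  assumes B: "is_band B" and P: "is_bp_onto P B" and b: "b \<in> B" and d: "d \<in> dcompl B"
  shows "P (b + d) = b"
proof -
  have 1: "P (b + d) \<in> B" "(b + d) - P (b + d) \<in> dcompl B" using P unfolding is_bp_onto_def by auto
  have "P (b + d) - b \<in> B" using 1(1) b by (rule band_diff[OF B])
  moreover have eq: "P (b + d) - b = d - ((b + d) - P (b + d))" by (simp add: algebra_simps)
  have "d - ((b + d) - P (b + d)) \<in> dcompl B" by (rule band_diff[OF dcompl_band d 1(2)])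
  then have "P (b + d) - b \<in> dcompl B" by (simp only: eq)
  ultimately have "P (b + d) - b = 0" by (rule band_inter_dcompl)
  then show ?thesis by simp
qed

lemma bp_onto_eq:
  assumes B: "is_band (B::'u::dc_riesz_space set)" and P: "is_bp_onto P B" and Q: "is_bp_onto Q B"
  shows "P = Q"
proof
  fix x
  have "Q x \<in> B" "x - Q x \<in> dcompl B" using Q unfolding is_bp_onto_def by auto
  from bp_onto_unique[OF B P this] show "P x = Q x" by simp
qed

lemma bproj_onto: "is_band B \<Longrightarrow> is_bp_onto (bproj B) B"
  unfolding bproj_def by (rule theI[of _ "bpc B"]) (auto intro: bpc_onto bp_onto_eq)

lemma bproj_eq: "is_band B \<Longrightarrow> is_bp_onto P B \<Longrightarrow> bproj B = P"
  using bproj_onto bp_onto_eq by blast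

lemma bproj_bpc: "is_band B \<Longrightarrow> bproj B = bpc B"
  by (rule bproj_eq) (auto intro: bpc_onto)




context
  fixes B :: "'u::dc_riesz_space set"
  assumes B: "is_band B"
begin

lemma bp_in: "bproj B x \<in> B" using bproj_onto[OF B] unfolding is_bp_onto_def by auto
lemma bp_rest: "x - bproj B x \<in> dcompl B" using bproj_onto[OF B] unfolding is_bp_onto_def by auto
lemma bp_decomp: "b \<in> B \<Longrightarrow> d \<in> dcompl B \<Longrightarrow> bproj B (b + d) = b"
  by (rule bp_onto_unique[OF B bproj_onto[OF B]])
lemma bp_id: "b \<in> B \<Longrightarrow> bproj B b = b"
  using bp_decomp[OF _ band_0[OF dcompl_band[of B]], of b] by simp
lemma bp_zero: "d \<in> dcompl B \<Longrightarrow> bproj B d = 0"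
  using bp_decomp[OF band_0[OF B], of d] by simp
lemma bp_add: "bproj B (x + y) = bproj B x + bproj B y"
proof -
  have "x + y = (bproj B x + bproj B y) + ((x - bproj B x) + (y - bproj B y))" by simp
  moreover have "bproj B x + bproj B y \<in> B" by (rule band_add[OF B bp_in bp_in])
  moreover have "(x - bproj B x) + (y - bproj B y) \<in> dcompl B" by (rule band_add[OF dcompl_band bp_rest bp_rest])
  ultimately show ?thesis using bp_decomp by metis
qed
lemma bp_scale: "bproj B (c *\<^sub>R x) = c *\<^sub>R bproj B x"
proof -
  have "c *\<^sub>R x = c *\<^sub>R bproj B x + c *\<^sub>R (x - bproj B x)" by (simp add: algebra_simps)
  moreover have "c *\<^sub>R bproj B x \<in> B" by (rule band_scale[OF B bp_in])
  moreover have "c *\<^sub>R (x - bproj B x) \<in> dcompl B" by (rule band_scale[OF dcompl_band bp_rest])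
  ultimately show ?thesis using bp_decomp by metis
qed
lemma bp_neg: "bproj B (- x) = - bproj B x" using bp_scale[of "-1" x] by simp
lemma bp_diff: "bproj B (x - y) = bproj B x - bproj B y"
  using bp_add[of x "-y"] bp_neg[of y] by simp
lemma bp_idem: "bproj B (bproj B x) = bproj B x" by (rule bp_id[OF bp_in])
lemma bp_0: "bproj B 0 = 0" using bp_id[OF band_0[OF B]] .

lemma bp_pos: "0 \<le> x \<Longrightarrow> 0 \<le> bproj B x" and bp_le_self: "0 \<le> x \<Longrightarrow> bproj B x \<le> x"
proof -
  assume x: "0 \<le> x"
  have "bproj B x = pp B x" unfolding bproj_bpc[OF B] bpc_def using x pp_0[OF B]
    by (simp add: sup.absorb1 inf.absorb2)
  then show "0 \<le> bproj B x" "bproj B x \<le> x" using pp_props[OF B x] by auto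
qed

lemma bp_mono: "x \<le> y \<Longrightarrow> bproj B x \<le> bproj B y"
  using bp_pos[of "y - x"] by (simp add: bp_diff)

lemma bp_rabs: "rabs (bproj B x) \<le> rabs x"
proof -
  have "bproj B x \<le> bproj B (rabs x)" using le_rabs(1) by (rule bp_mono)
  moreover have "- bproj B x \<le> bproj B (rabs x)" using le_rabs(2)[of x] bp_mono bp_neg by metis
  moreover have "bproj B (rabs x) \<le> rabs x" by (rule bp_le_self[OF rabs_nonneg])
  ultimately show ?thesis unfolding rabs_le_iff by auto
qed

lemma bp_iff: "x \<in> B \<longleftrightarrow> bproj B x = x"
  using bp_id bp_in by metis

lemma bp_compl_onto: "is_bp_onto (\<lambda>x. x - bproj B x) (dcompl B)"
  unfolding is_bp_onto_def using bp_rest bp_in subset_ddcompl by auto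

lemma bproj_dcompl: "bproj (dcompl B) x = x - bproj B x"
  using bproj_eq[OF dcompl_band bp_compl_onto] by simp

lemma ddcompl_band: "dcompl (dcompl B) = B"
proof
  show "B \<subseteq> dcompl (dcompl B)" by (rule subset_ddcompl)
  show "dcompl (dcompl B) \<subseteq> B"
  proof
    fix x assume x: "x \<in> dcompl (dcompl B)"
    have "x - bproj B x \<in> dcompl (dcompl B)"
      using x subset_ddcompl[of B] bp_in[of x] by (auto intro: band_diff[OF dcompl_band])
    then have "x - bproj B x = 0" using bp_rest[of x] band_inter_dcompl by blast
    then show "x \<in> B" using bp_in[of x] by simp
  qed
qed

end

lemma band_inter: "is_band C \<Longrightarrow> is_band E \<Longrightarrow> is_band (C \<inter> (E::'u::dc_riesz_space set))"
  unfolding is_band_def is_ideal_in_def by auto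

lemma band_UNIV: "is_band (UNIV::'u::dc_riesz_space set)"
  unfolding is_band_def is_ideal_in_def by auto

lemma bproj_UNIV: "bproj (UNIV::'u::dc_riesz_space set) = id"
  by (rule bproj_eq[OF band_UNIV]) (auto simp: is_bp_onto_def dcompl_def)

lemma bp_comp:
  fixes C E :: "'u::dc_riesz_space set"
  assumes C: "is_band C" and E: "is_band E"
  shows "bproj C (bproj E x) = bproj (C \<inter> E) x"
proof -
  have "is_bp_onto (\<lambda>x. bproj C (bproj E x)) (C \<inter> E)"
    unfolding is_bp_onto_def
  proof safe
    fix x :: 'u
    show "bproj C (bproj E x) \<in> C" by (rule bp_in[OF C])
    show "bproj C (bproj E x) \<in> E" by (rule band_solid[OF E bp_in[OF E] bp_rabs[OF C]])
    have "x - bproj C (bproj E x) = (x - bproj E x) + (bproj E x - bproj C (bproj E x))" by simp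
    moreover have "x - bproj E x \<in> dcompl (C \<inter> E)"
      using bp_rest[OF E] dcompl_mono[of "C \<inter> E" E] by auto
    moreover have "bproj E x - bproj C (bproj E x) \<in> dcompl (C \<inter> E)"
      using bp_rest[OF C] dcompl_mono[of "C \<inter> E" C] by auto
    ultimately show "x - bproj C (bproj E x) \<in> dcompl (C \<inter> E)"
      by (metis band_add[OF dcompl_band])
  qed
  from bproj_eq[OF band_inter[OF C E] this] show ?thesis by simp
qed

lemma bp_commute:
  fixes C E :: "'u::dc_riesz_space set"
  assumes C: "is_band C" and E: "is_band E"
  shows "bproj C (bproj E x) = bproj E (bproj C x)"
  using bp_comp[OF C E] bp_comp[OF E C] by (simp add: Int_commute)

lemma bproj_inj:
  fixes C E :: "'u::dc_riesz_space set"
  assumes C: "is_band C" and E: "is_band E" and eq: "bproj C = bproj E"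
  shows "C = E"
  using bp_iff[OF C] bp_iff[OF E] eq by auto

lemma bp_le_iff:
  fixes C E :: "'u::dc_riesz_space set"
  assumes C: "is_band C" and E: "is_band E"
  shows "bp_le (bproj C) (bproj E) \<longleftrightarrow> C \<subseteq> E"
proof
  assume "C \<subseteq> E"
  then have "C \<inter> E = C" by auto
  then show "bp_le (bproj C) (bproj E)" unfolding bp_le_def using bp_comp[OF C E] by simp
next
  assume a: "bp_le (bproj C) (bproj E)"
  show "C \<subseteq> E"
  proof
    fix c assume c: "c \<in> C"
    have "c = bproj C (bproj E c)" using a bp_id[OF C c] unfolding bp_le_def by simp
    also have "\<dots> = bproj (C \<inter> E) c" by (rule bp_comp[OF C E])
    also have "\<dots> \<in> C \<inter> E" by (rule bp_in[OF band_inter[OF C E]])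
    finally show "c \<in> E" by simp
  qed
qed

lemma band_proj_iff: "band_proj Q \<longleftrightarrow> (\<exists>C. is_band C \<and> Q = bproj (C::'u::dc_riesz_space set))"
  unfolding band_proj_def using bproj_eq bproj_onto by metis

section \<open>Suprema and infima of band projections\<close>

lemma bp_Sup_eq:
  fixes C :: "'i \<Rightarrow> 'u::dc_riesz_space set"
  assumes C: "\<And>i. i \<in> I \<Longrightarrow> is_band (C i)"
  shows "bp_Sup ((\<lambda>i. bproj (C i)) ` I) = bproj (dcompl (dcompl (\<Union>i\<in>I. C i)))"
proof -
  define G where "G = dcompl (dcompl (\<Union>i\<in>I. C i))"
  have G: "is_band G" unfolding G_def by (rule dcompl_band)
  have up: "bp_le (bproj (C i)) (bproj G)" if "i \<in> I" for i
    using that subset_ddcompl[of "\<Union>i\<in>I. C i"] unfolding G_def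
    by (subst bp_le_iff[OF C dcompl_band]) auto
  have least: "G \<subseteq> E" if E: "is_band E" and "\<forall>i\<in>I. bp_le (bproj (C i)) (bproj E)" for E
  proof -
    have "(\<Union>i\<in>I. C i) \<subseteq> E" using that bp_le_iff[OF C E] by auto
    then have "G \<subseteq> dcompl (dcompl E)" unfolding G_def by (intro dcompl_mono)
    then show ?thesis using ddcompl_band[OF E] by simp
  qed
  show ?thesis
    unfolding bp_Sup_def G_def[symmetric]
  proof (rule the_equality)
    show "band_proj (bproj G) \<and> (\<forall>P\<in>(\<lambda>i. bproj (C i)) ` I. bp_le P (bproj G)) \<and>
      (\<forall>R. band_proj R \<and> (\<forall>P\<in>(\<lambda>i. bproj (C i)) ` I. bp_le P R) \<longrightarrow> bp_le (bproj G) R)"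
      using G up least bp_le_iff[OF G] by (auto simp: band_proj_iff)
    fix Q assume Q: "band_proj Q \<and> (\<forall>P\<in>(\<lambda>i. bproj (C i)) ` I. bp_le P Q) \<and>
      (\<forall>R. band_proj R \<and> (\<forall>P\<in>(\<lambda>i. bproj (C i)) ` I. bp_le P R) \<longrightarrow> bp_le Q R)"
    then obtain E where E: "is_band E" "Q = bproj E" by (auto simp: band_proj_iff)
    have "G \<subseteq> E" using Q E least by auto
    moreover have "bp_le Q (bproj G)" using Q G up by (auto simp: band_proj_iff)
    then have "E \<subseteq> G" using E bp_le_iff[OF E(1) G] by simp
    ultimately show "Q = bproj G" using E by auto
  qed
qed

lemma bp_Inf_eq:
  fixes K :: "'u::dc_riesz_space set"
  assumes K: "is_band K" and F: "\<And>P. P \<in> F \<Longrightarrow> band_proj P"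
    and low: "\<And>P. P \<in> F \<Longrightarrow> bp_le (bproj K) P"
    and great: "\<And>E. is_band E \<Longrightarrow> (\<forall>P\<in>F. bp_le (bproj E) P) \<Longrightarrow> E \<subseteq> K"
  shows "bp_Inf F = bproj K"
  unfolding bp_Inf_def
proof (rule the_equality)
  show "band_proj (bproj K) \<and> (\<forall>P\<in>F. bp_le (bproj K) P) \<and>
    (\<forall>R. band_proj R \<and> (\<forall>P\<in>F. bp_le R P) \<longrightarrow> bp_le R (bproj K))"
    using K low great bp_le_iff[OF _ K] by (auto simp: band_proj_iff)
  fix Q assume Q: "band_proj Q \<and> (\<forall>P\<in>F. bp_le Q P) \<and> (\<forall>R. band_proj R \<and> (\<forall>P\<in>F. bp_le R P) \<longrightarrow> bp_le R Q)"
  then obtain E where E: "is_band E" "Q = bproj E" by (auto simp: band_proj_iff)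
  have "E \<subseteq> K" using Q E great by auto
  moreover have "bp_le (bproj K) Q" using Q K low by (auto simp: band_proj_iff)
  then have "K \<subseteq> E" using E bp_le_iff[OF K E(1)] by simp
  ultimately show "Q = bproj K" using E by auto
qed




locale mt =
  fixes X :: "'u::dc_riesz_space set"
    and T :: "'u \<Rightarrow> 'u"
    and e :: 'u
    and mult :: "'u \<Rightarrow> 'u \<Rightarrow> 'u"
    and P :: "nat \<Rightarrow> 'u \<Rightarrow> 'u"
  assumes uc: "is_universal_completion_of X"
    and unit: "weak_order_unit X e"
    and falg: "f_algebra_unit mult e"
    and ce: "cond_exp X T e"
    and bp: "\<And>n. band_proj (P n)"
    and ind: "T_indep T mult e P"
begin

lemma X_ideal: "is_ideal_in UNIV X" using uc unfolding is_universal_completion_of_def by auto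
lemma X_0: "0 \<in> X" using X_ideal unfolding is_ideal_in_def by auto
lemma X_add: "x \<in> X \<Longrightarrow> y \<in> X \<Longrightarrow> x + y \<in> X" using X_ideal unfolding is_ideal_in_def by auto
lemma X_scale: "x \<in> X \<Longrightarrow> c *\<^sub>R x \<in> X" using X_ideal unfolding is_ideal_in_def by auto
lemma X_solid: "x \<in> X \<Longrightarrow> rabs y \<le> rabs x \<Longrightarrow> y \<in> X" using X_ideal unfolding is_ideal_in_def by auto
lemma X_neg: "x \<in> X \<Longrightarrow> - x \<in> X" using X_scale[of x "-1"] by simp
lemma X_diff: "x \<in> X \<Longrightarrow> y \<in> X \<Longrightarrow> x - y \<in> X" using X_add[of x "-y"] X_neg[of y] by simp
lemma X_pos_le: "x \<in> X \<Longrightarrow> 0 \<le> y \<Longrightarrow> y \<le> x \<Longrightarrow> y \<in> X"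
  by (rule X_solid) (auto simp: rabs_pos)
lemma X_sum: "(\<And>k. k \<in> A \<Longrightarrow> f k \<in> X) \<Longrightarrow> sum f A \<in> X"
  by (induction A rule: infinite_finite_induct) (auto simp: X_0 X_add)
lemma X_pprt: "x \<in> X \<Longrightarrow> sup x 0 \<in> X"
  by (rule X_solid) (auto intro: rabs_pprt_le)
lemma X_nprt: "x \<in> X \<Longrightarrow> inf x 0 \<in> X"
  by (rule X_solid) (auto intro: rabs_nprt_le)
lemma X_dense: "0 < v \<Longrightarrow> \<exists>x\<in>X. 0 < x \<and> x \<le> v"
  using uc unfolding is_universal_completion_of_def by auto

lemma e_X: "e \<in> X" and e_pos: "0 \<le> e" using unit unfolding weak_order_unit_def by auto
lemma e_weak: "x \<in> X \<Longrightarrow> inf (rabs x) e = 0 \<Longrightarrow> x = 0" using unit unfolding weak_order_unit_def by auto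

lemma X_le_e: "0 \<le> y \<Longrightarrow> y \<le> c *\<^sub>R e \<Longrightarrow> y \<in> X"
  using X_pos_le[OF X_scale[OF e_X]] by blast

lemma T_X: "x \<in> X \<Longrightarrow> T x \<in> X" using ce unfolding cond_exp_def by auto
lemma T_add: "x \<in> X \<Longrightarrow> y \<in> X \<Longrightarrow> T (x + y) = T x + T y" using ce unfolding cond_exp_def by auto
lemma T_scale: "x \<in> X \<Longrightarrow> T (c *\<^sub>R x) = c *\<^sub>R T x" using ce unfolding cond_exp_def by auto
lemma T_pos: "x \<in> X \<Longrightarrow> 0 \<le> x \<Longrightarrow> 0 \<le> T x" using ce unfolding cond_exp_def by auto
lemma T_strict: "x \<in> X \<Longrightarrow> 0 < x \<Longrightarrow> 0 < T x" using ce unfolding cond_exp_def by auto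
lemma T_idem: "x \<in> X \<Longrightarrow> T (T x) = T x" using ce unfolding cond_exp_def by auto
lemma T_e: "T e = e" using ce unfolding cond_exp_def by auto
lemma T_sup: "a \<in> T ` X \<Longrightarrow> b \<in> T ` X \<Longrightarrow> sup a b \<in> T ` X" using ce unfolding cond_exp_def by auto
lemma T_oc: "D \<subseteq> X \<Longrightarrow> D \<noteq> {} \<Longrightarrow> (\<forall>x\<in>D. \<forall>y\<in>D. \<exists>z\<in>D. z \<le> x \<and> z \<le> y)
  \<Longrightarrow> (\<forall>x\<in>D. 0 \<le> x) \<Longrightarrow> Inf D = 0 \<Longrightarrow> Inf (T ` D) = 0"
  using ce unfolding cond_exp_def by blast

lemma T_neg: "x \<in> X \<Longrightarrow> T (- x) = - T x" using T_scale[of x "-1"] by simp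
lemma T_diff: "x \<in> X \<Longrightarrow> y \<in> X \<Longrightarrow> T (x - y) = T x - T y"
  using T_add[of x "-y"] T_neg[of y] X_neg[of y] by simp
lemma T_0: "T 0 = 0" using T_scale[OF X_0, of 0] by simp
lemma T_mono: "x \<in> X \<Longrightarrow> y \<in> X \<Longrightarrow> x \<le> y \<Longrightarrow> T x \<le> T y"
  using T_pos[of "y - x"] X_diff[of y x] T_diff[of y x] by simp
lemma T_sum: "(\<And>k. k \<in> A \<Longrightarrow> f k \<in> X) \<Longrightarrow> T (sum f A) = (\<Sum>k\<in>A. T (f k))"
proof (induction A rule: infinite_finite_induct)
  case (insert x F)
  then show ?case using T_add[of "f x" "sum f F"] X_sum[of F f] by simp
qed (auto simp: T_0)
lemma T_strict0: "x \<in> X \<Longrightarrow> 0 \<le> x \<Longrightarrow> T x = 0 \<Longrightarrow> x = 0"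
  using T_strict[of x] by (auto simp: order.strict_iff_order)

lemma TX_T: "a \<in> T ` X \<Longrightarrow> T a = a" using T_idem by auto
lemma TX_neg: "a \<in> T ` X \<Longrightarrow> - a \<in> T ` X"
proof -
  assume "a \<in> T ` X"
  then obtain x where x: "x \<in> X" "a = T x" by auto
  then have "- a = T (- x)" using T_neg by simp
  then show ?thesis using X_neg[OF x(1)] by auto
qed
lemma TX_inf: "a \<in> T ` X \<Longrightarrow> b \<in> T ` X \<Longrightarrow> inf a b \<in> T ` X"
proof -
  assume a: "a \<in> T ` X" and b: "b \<in> T ` X"
  have "- sup (- a) (- b) \<in> T ` X" by (rule TX_neg[OF T_sup[OF TX_neg[OF a] TX_neg[OF b]]])
  then show ?thesis by (subst inf_eq_neg_sup)
qed
lemma TX_sum: "(\<And>k. k \<in> A \<Longrightarrow> f k \<in> X) \<Longrightarrow> (\<Sum>k\<in>A. T (f k)) \<in> T ` X"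
proof -
  assume f: "\<And>k. k \<in> A \<Longrightarrow> f k \<in> X"
  have "(\<Sum>k\<in>A. T (f k)) = T (sum f A)" using T_sum[of A f] f by simp
  then show ?thesis using X_sum[of A f] f by (simp add: image_eqI)
qed
lemma TX_e: "e \<in> T ` X" using T_e e_X by force
lemma TX_scale: "a \<in> T ` X \<Longrightarrow> c *\<^sub>R a \<in> T ` X"
proof -
  assume "a \<in> T ` X"
  then obtain x where x: "x \<in> X" "a = T x" by auto
  then have "c *\<^sub>R a = T (c *\<^sub>R x)" using T_scale by simp
  then show ?thesis using X_scale[OF x(1)] by auto
qed

lemma falg_parts:
  "\<forall>x y z. mult x (y + z) = mult x y + mult x z"
  "\<forall>x y z. mult (x + y) z = mult x z + mult y z"
  "\<forall>x y z. mult (mult x y) z = mult x (mult y z)"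
  "\<forall>x y. 0 \<le> x \<and> 0 \<le> y \<longrightarrow> 0 \<le> mult x y"
  "\<forall>x y z. inf x y = 0 \<and> 0 \<le> z \<longrightarrow> inf (mult z x) y = 0 \<and> inf (mult x z) y = 0"
  "\<forall>x. mult e x = x"
  "\<forall>x. mult x e = x"
  using falg unfolding f_algebra_unit_def by simp_all

lemma mult_addR: "mult x (y + z) = mult x y + mult x z" using falg_parts(1) by simp
lemma mult_addL: "mult (x + y) z = mult x z + mult y z" using falg_parts(2) by simp
lemma mult_assoc: "mult (mult x y) z = mult x (mult y z)" using falg_parts(3) by simp
lemma mult_pos: "0 \<le> x \<Longrightarrow> 0 \<le> y \<Longrightarrow> 0 \<le> mult x y" using falg_parts(4) by simp
lemma mult_disj: "inf x y = 0 \<Longrightarrow> 0 \<le> z \<Longrightarrow> inf (mult z x) y = 0 \<and> inf (mult x z) y = 0"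
  using falg_parts(5) by simp
lemma mult_eL: "mult e x = x" using falg_parts(6) by simp
lemma mult_eR: "mult x e = x" using falg_parts(7) by simp

lemma mult_0R: "mult x 0 = 0" using mult_addR[of x 0 0] by simp
lemma mult_0L: "mult 0 x = 0" using mult_addL[of 0 0 x] by simp
lemma mult_diffR: "mult x (y - z) = mult x y - mult x z"
  using mult_addR[of x "y - z" z] by (simp add: algebra_simps)
lemma mult_diffL: "mult (x - y) z = mult x z - mult y z"
  using mult_addL[of "x - y" y z] by (simp add: algebra_simps)
lemma mult_monoR: "0 \<le> a \<Longrightarrow> x \<le> y \<Longrightarrow> mult a x \<le> mult a y"
  using mult_pos[of a "y - x"] mult_diffR[of a y x] by simp
lemma mult_monoL: "0 \<le> z \<Longrightarrow> a \<le> b \<Longrightarrow> mult a z \<le> mult b z"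
  using mult_pos[of "b - a" z] mult_diffL[of b a z] by simp
lemma mult_le_id: "g \<le> e \<Longrightarrow> 0 \<le> z \<Longrightarrow> mult g z \<le> z"
  using mult_monoL[of z g e] mult_eL[of z] by simp

lemma prod_bound:
  fixes t :: "nat \<Rightarrow> 'u"
  assumes t: "\<And>i. 0 \<le> t i" "\<And>i. t i \<le> e"
  shows "0 \<le> foldr (\<lambda>i a. mult (e - t i) a) is e \<and> foldr (\<lambda>i a. mult (e - t i) a) is e \<le> e
    \<and> mult (foldr (\<lambda>i a. mult (e - t i) a) is e) (e + sum_list (map t is)) \<le> e"
proof (induction "is")
  case Nil
  then show ?case using e_pos mult_eL[of e] by simp
next
  case (Cons i js)
  define q where "q = foldr (\<lambda>i a. mult (e - t i) a) js e"
  define s where "s = sum_list (map t js)"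
  have q: "0 \<le> q" "q \<le> e" "mult q (e + s) \<le> e" using Cons unfolding q_def s_def by auto
  have ei: "0 \<le> e - t i" using t by simp
  have 1: "0 \<le> mult (e - t i) q" using mult_pos[OF ei q(1)] .
  have "mult (e - t i) q \<le> mult (e - t i) e" by (rule mult_monoR[OF ei q(2)])
  also have "\<dots> = e - t i" by (rule mult_eR)
  also have "\<dots> \<le> e" using t by simp
  finally have 2: "mult (e - t i) q \<le> e" .
  have "e + (t i + s) = t i + (e + s)" by (simp add: algebra_simps)
  then have "mult (mult (e - t i) q) (e + (t i + s)) = mult (e - t i) (mult q (t i) + mult q (e + s))"
    by (simp only: mult_assoc mult_addR)
  also have "\<dots> \<le> mult (e - t i) (t i + e)"
    by (rule mult_monoR[OF ei add_mono[OF mult_le_id[OF q(2) t(1)] q(3)]])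
  also have "\<dots> = e - mult (t i) (t i)"
    by (simp add: mult_addR mult_diffL mult_eL mult_eR)
  also have "\<dots> \<le> e" using mult_pos[OF t(1) t(1)] by simp
  finally have 3: "mult (mult (e - t i) q) (e + (t i + s)) \<le> e" .
  show ?case using 1 2 3 unfolding q_def s_def by simp
qed

definition CC :: "nat \<Rightarrow> 'u set" where
  "CC k = (SOME C. is_band C \<and> P k = bproj C)"

lemma CC: "is_band (CC k)" "P k = bproj (CC k)"
proof -
  obtain C where "is_band C \<and> P k = bproj C" using bp[of k] unfolding band_proj_iff by blast
  then have "is_band (CC k) \<and> P k = bproj (CC k)" unfolding CC_def by (rule someI)
  then show "is_band (CC k)" "P k = bproj (CC k)" by auto
qed

definition p :: "nat \<Rightarrow> 'u" where "p k = P k e"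
definition t :: "nat \<Rightarrow> 'u" where "t k = T (p k)"
definition S :: "nat \<Rightarrow> 'u" where "S N = (\<Sum>k<N. t k)"

lemma p_eq: "p k = bproj (CC k) e" unfolding p_def by (simp only: CC(2))
lemma p_pos: "0 \<le> p k" unfolding p_eq by (rule bp_pos[OF CC(1) e_pos])
lemma p_le: "p k \<le> e" unfolding p_eq by (rule bp_le_self[OF CC(1) e_pos])
lemma p_C: "p k \<in> CC k" unfolding p_eq by (rule bp_in[OF CC(1)])
lemma p_X: "p k \<in> X" using X_pos_le[OF e_X p_pos p_le] .
lemma t_X: "t k \<in> X" unfolding t_def using T_X[OF p_X] .
lemma t_pos: "0 \<le> t k" unfolding t_def using T_pos[OF p_X p_pos] .
lemma t_le: "t k \<le> e" unfolding t_def using T_mono[OF p_X e_X p_le] T_e by simp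
lemma t_TX: "t k \<in> T ` X" unfolding t_def using p_X by auto
lemma S_X: "S N \<in> X" unfolding S_def by (rule X_sum) (rule t_X)
lemma S_pos: "0 \<le> S N" unfolding S_def by (rule sum_nonneg) (rule t_pos)
lemma S_TX: "S N \<in> T ` X" unfolding S_def t_def by (rule TX_sum) (rule p_X)
lemma S_T: "T (S N) = S N" using TX_T[OF S_TX] .
lemma S_mono: "N \<le> M \<Longrightarrow> S N \<le> S M"
  unfolding S_def by (rule sum_mono2) (auto simp: t_pos)
lemma S_split: "n \<le> N \<Longrightarrow> S N = S n + sum t {n..<N}"
  unfolding S_def by (metis atLeast0LessThan sum.atLeastLessThan_concat zero_le)

end




context mt
begin

lemma ne_pos [simp]: "0 \<le> real n *\<^sub>R e"
  by (rule scaleR_nonneg_nonneg) (auto simp: e_pos)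

lemma below_Inf_zero:
  assumes "Inf (T ` D) = 0" "D \<noteq> {}" "\<And>d. d \<in> D \<Longrightarrow> z \<le> T d"
  shows "z \<le> 0"
proof -
  have "z \<le> Inf (T ` D)" using assms(2,3) by (intro cInf_greatest) auto
  then show ?thesis using assms(1) by simp
qed

lemma OC_seq:
  fixes y :: "nat \<Rightarrow> 'u"
  assumes mono: "\<And>N M. N \<le> M \<Longrightarrow> y N \<le> y M" and yX: "\<And>N. y N \<in> X"
    and bdd: "bdd_above (range y)" and sX: "Sup (range y) \<in> X"
  shows "Inf (T ` range (\<lambda>N. Sup (range y) - y N)) = 0"
proof -
  define s where "s = Sup (range y)"
  define D where "D = range (\<lambda>N. s - y N)"
  have ys: "y N \<le> s" for N unfolding s_def using bdd by (intro cSup_upper) auto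
  have DX: "D \<subseteq> X" unfolding D_def s_def using X_diff[OF sX yX] by auto
  have Dne: "D \<noteq> {}" unfolding D_def by auto
  have Dpos: "\<forall>x\<in>D. 0 \<le> x" unfolding D_def using ys by auto
  have Ddir: "\<forall>a\<in>D. \<forall>b\<in>D. \<exists>c\<in>D. c \<le> a \<and> c \<le> b"
  proof (intro ballI)
    fix a b assume "a \<in> D" "b \<in> D"
    then obtain N M where a: "a = s - y N" and b: "b = s - y M" unfolding D_def by auto
    have "s - y (max N M) \<in> D" unfolding D_def by auto
    moreover have "s - y (max N M) \<le> a" "s - y (max N M) \<le> b"
      unfolding a b using mono[of N "max N M"] mono[of M "max N M"] by auto
    ultimately show "\<exists>c\<in>D. c \<le> a \<and> c \<le> b" by blast
  qed
  have bddD: "bdd_below D" using Dpos by (auto intro: bdd_belowI[of _ 0])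
  have I0: "0 \<le> Inf D" using Dne Dpos by (intro cInf_greatest) auto
  have "y N \<le> s - Inf D" for N
  proof -
    have "Inf D \<le> s - y N" using bddD unfolding D_def by (intro cInf_lower) auto
    then show ?thesis by (simp add: algebra_simps)
  qed
  then have "s \<le> s - Inf D" unfolding s_def by (intro cSup_least) auto
  then have "Inf D = 0" using I0 by simp
  then have "Inf (T ` D) = 0" using T_oc[OF DX Dne Ddir Dpos] by simp
  then show ?thesis unfolding D_def s_def .
qed

lemma inf_seq_zero:
  assumes xX: "x \<in> X" and x0: "0 \<le> x"
  shows "Inf (T ` range (\<lambda>n::nat. x - inf x (real n *\<^sub>R e))) = 0"
proof -
  define D where "D = range (\<lambda>n::nat. x - inf x (real n *\<^sub>R e))"
  have infX: "inf x (real n *\<^sub>R e) \<in> X" for n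
    by (rule X_pos_le[OF xX]) (use x0 e_pos in auto)
  have DX: "D \<subseteq> X" unfolding D_def using X_diff[OF xX infX] by auto
  have Dne: "D \<noteq> {}" unfolding D_def by auto
  have dp: "0 \<le> x - inf x (real n *\<^sub>R e)" for n
    using inf.cobounded1[of x "real n *\<^sub>R e"] by (simp only: diff_ge_0_iff_ge)
  have Dpos: "\<forall>x\<in>D. 0 \<le> x" unfolding D_def using dp by blast
  have monoI: "inf x (real n *\<^sub>R e) \<le> inf x (real m *\<^sub>R e)" if "n \<le> m" for n m
  proof -
    have "real n *\<^sub>R e \<le> real m *\<^sub>R e" using that e_pos by (intro scaleR_right_mono) auto
    then show ?thesis by (rule inf_mono[OF order_refl])
  qed
  have Ddir: "\<forall>a\<in>D. \<forall>b\<in>D. \<exists>c\<in>D. c \<le> a \<and> c \<le> b"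
  proof (intro ballI)
    fix a b assume "a \<in> D" "b \<in> D"
    then obtain N M where a: "a = x - inf x (real N *\<^sub>R e)" and b: "b = x - inf x (real M *\<^sub>R e)"
      unfolding D_def by auto
    have "x - inf x (real (max N M) *\<^sub>R e) \<in> D" unfolding D_def by auto
    moreover have "x - inf x (real (max N M) *\<^sub>R e) \<le> a" "x - inf x (real (max N M) *\<^sub>R e) \<le> b"
      unfolding a b by (rule diff_left_mono, rule monoI, simp)+
    ultimately show "\<exists>c\<in>D. c \<le> a \<and> c \<le> b" by blast
  qed
  have bddD: "bdd_below D" using Dpos by (auto intro: bdd_belowI[of _ 0])
  define z where "z = Inf D"
  have z0: "0 \<le> z" unfolding z_def using Dne Dpos by (intro cInf_greatest) auto
  have zle: "z \<le> x - inf x (real n *\<^sub>R e)" for n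
    unfolding z_def using bddD unfolding D_def by (intro cInf_lower) auto
  define w where "w = inf z e"
  have w0: "0 \<le> w" unfolding w_def using z0 e_pos by simp
  have wz: "w \<le> z" and we: "w \<le> e" unfolding w_def by auto
  have key: "inf x (real n *\<^sub>R e) + w \<le> x" for n
  proof -
    have "w \<le> x - inf x (real n *\<^sub>R e)" using wz zle[of n] by (rule order_trans)
    then show ?thesis by (simp only: le_diff_eq add.commute)
  qed
  have nw: "real n *\<^sub>R w \<le> inf x (real n *\<^sub>R e)" for n
  proof (induction n)
    case 0 then show ?case using x0 by simp
  next
    case (Suc n)
    have "real (Suc n) *\<^sub>R w = real n *\<^sub>R w + w" by (simp add: algebra_simps)
    also have "\<dots> \<le> inf x (real n *\<^sub>R e) + w" using Suc by simp
    also have "\<dots> \<le> x" by (rule key)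
    finally have 1: "real (Suc n) *\<^sub>R w \<le> x" .
    have 2: "real (Suc n) *\<^sub>R w \<le> real (Suc n) *\<^sub>R e" using we by (intro scaleR_left_mono) auto
    show ?case using 1 2 by simp
  qed
  have "w = 0" using w0 by (rule archimedean_zero[where M = x]) (use nw in \<open>auto intro: order_trans\<close>)
  moreover have "z \<in> X"
  proof -
    have "inf x (real 0 *\<^sub>R e) = 0" using x0 by (simp add: inf_absorb2)
    then have "z \<le> x" using zle[of 0] by simp
    then show ?thesis using X_pos_le[OF xX z0] by simp
  qed
  ultimately have "z = 0" using e_weak[of z] z0 unfolding w_def by (simp add: rabs_pos)
  then have "Inf D = 0" unfolding z_def .
  then show ?thesis using T_oc[OF DX Dne Ddir Dpos] unfolding D_def by simp
qed

lemma T_band: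
  fixes E :: "'u set"
  assumes E: "is_band E" and TE: "T (bproj E e) \<in> E" and xX: "x \<in> X" and x0: "0 \<le> x"
  shows "T (bproj E x) \<in> E"
proof -
  define Q where "Q = bproj (dcompl E)"
  have Ed: "is_band (dcompl E)" by (rule dcompl_band)
  have PX: "bproj E y \<in> X" if "y \<in> X" for y
    using X_solid[OF that bp_rabs[OF E]] .
  have Pe: "bproj E e \<in> X" by (rule PX[OF e_X])
  have TPx0: "0 \<le> T (bproj E x)" using T_pos[OF PX[OF xX] bp_pos[OF E x0]] .
  have bound: "Q (T (bproj E x)) \<le> T d" if d: "d \<in> range (\<lambda>n::nat. x - inf x (real n *\<^sub>R e))" for d
  proof -
    obtain n where dn: "d = x - inf x (real n *\<^sub>R e)" using d by auto
    define xn where "xn = inf x (real n *\<^sub>R e)"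
    have xn0: "0 \<le> xn" unfolding xn_def using x0 e_pos by simp
    have xnX: "xn \<in> X" unfolding xn_def by (rule X_pos_le[OF xX]) (use x0 e_pos in auto)
    have xnx: "xn \<le> x" unfolding xn_def by simp
    have dX: "x - xn \<in> X" using X_diff[OF xX xnX] .
    have d0: "0 \<le> x - xn" using xnx by simp
    have "bproj E xn \<le> bproj E (real n *\<^sub>R e)" unfolding xn_def by (rule bp_mono[OF E]) simp
    also have "\<dots> = real n *\<^sub>R bproj E e" by (rule bp_scale[OF E])
    finally have "T (bproj E xn) \<le> T (real n *\<^sub>R bproj E e)"
      using PX[OF xnX] X_scale[OF Pe] by (intro T_mono) auto
    also have "\<dots> = real n *\<^sub>R T (bproj E e)" using T_scale[OF Pe] .
    finally have le1: "T (bproj E xn) \<le> real n *\<^sub>R T (bproj E e)" .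
    have "T (bproj E xn) \<in> E"
      by (rule band_pos_le[OF E band_scale[OF E TE] T_pos[OF PX[OF xnX] bp_pos[OF E xn0]] le1])
    then have Q1: "Q (T (bproj E xn)) = 0" unfolding Q_def bproj_dcompl[OF E] using bp_id[OF E] by simp
    have "bproj E x = bproj E xn + bproj E (x - xn)" using bp_add[OF E, of xn "x - xn"] by simp
    then have "T (bproj E x) = T (bproj E xn) + T (bproj E (x - xn))"
      using T_add[OF PX[OF xnX] PX[OF dX]] by simp
    then have "Q (T (bproj E x)) = Q (T (bproj E (x - xn)))"
      unfolding Q_def using bp_add[OF Ed] Q1[unfolded Q_def] by simp
    also have "\<dots> \<le> T (bproj E (x - xn))"
      unfolding Q_def by (rule bp_le_self[OF Ed T_pos[OF PX[OF dX] bp_pos[OF E d0]]])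
    also have "\<dots> \<le> T (x - xn)" by (rule T_mono[OF PX[OF dX] dX bp_le_self[OF E d0]])
    finally show ?thesis unfolding dn xn_def .
  qed
  have "Q (T (bproj E x)) \<le> 0"
    by (rule below_Inf_zero[OF inf_seq_zero[OF xX x0]]) (use bound in auto)
  moreover have "0 \<le> Q (T (bproj E x))" unfolding Q_def by (rule bp_pos[OF Ed TPx0])
  ultimately have "Q (T (bproj E x)) = 0" by simp
  then have "T (bproj E x) = bproj E (T (bproj E x))" unfolding Q_def bproj_dcompl[OF E] by simp
  then show ?thesis using bp_in[OF E] by metis
qed

lemma T_comm:
  fixes E :: "'u set"
  assumes E: "is_band E" and TE: "T (bproj E e) = bproj E e" and xX: "x \<in> X"
  shows "bproj E (T x) = T (bproj E x)"
proof -
  have Ed: "is_band (dcompl E)" by (rule dcompl_band)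
  have PX: "bproj E y \<in> X" if "y \<in> X" for y
    using X_solid[OF that bp_rabs[OF E]] .
  have Pe: "bproj E e \<in> X" by (rule PX[OF e_X])
  have TEd: "T (bproj (dcompl E) e) \<in> dcompl E"
  proof -
    have "T (bproj (dcompl E) e) = T (e - bproj E e)" by (simp add: bproj_dcompl[OF E])
    also have "\<dots> = e - bproj E e" using T_diff[OF e_X Pe] T_e TE by simp
    also have "\<dots> = bproj (dcompl E) e" by (simp add: bproj_dcompl[OF E])
    finally show ?thesis using bp_in[OF Ed] by simp
  qed
  have pos: "bproj E (T y) = T (bproj E y)" if yX: "y \<in> X" and y0: "0 \<le> y" for y
  proof -
    have 1: "T (bproj E y) \<in> E" by (rule T_band[OF E _ yX y0]) (simp add: TE bp_in[OF E])
    have 2: "T (bproj (dcompl E) y) \<in> dcompl E" by (rule T_band[OF Ed TEd yX y0])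
    have "y = bproj E y + bproj (dcompl E) y" by (simp add: bproj_dcompl[OF E])
    moreover have "bproj (dcompl E) y \<in> X" using X_diff[OF yX PX[OF yX]] by (simp add: bproj_dcompl[OF E])
    ultimately have "T y = T (bproj E y) + T (bproj (dcompl E) y)"
      using T_add[OF PX[OF yX]] by metis
    then show ?thesis using bp_decomp[OF E 1 2] by simp
  qed
  define a where "a = sup x 0"
  define b where "b = - inf x 0"
  have aX: "a \<in> X" unfolding a_def by (rule X_pprt[OF xX])
  have bX: "b \<in> X" unfolding b_def by (rule X_neg[OF X_nprt[OF xX]])
  have a0: "0 \<le> a" unfolding a_def by simp
  have b0: "0 \<le> b" unfolding b_def by (simp only: neg_0_le_iff_le inf.cobounded2)
  have xab: "x = a - b" unfolding a_def b_def using add_eq_inf_sup[of x 0] by (simp add: add.commute)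
  have "bproj E (T x) = bproj E (T a) - bproj E (T b)"
    unfolding xab using T_diff[OF aX bX] bp_diff[OF E] by simp
  also have "\<dots> = T (bproj E a) - T (bproj E b)" using pos[OF aX a0] pos[OF bX b0] by simp
  also have "\<dots> = T (bproj E x)" unfolding xab using T_diff[OF PX[OF aX] PX[OF bX]] bp_diff[OF E] by simp
  finally show ?thesis .
qed

lemma K_zero:
  fixes K :: "'u set"
  assumes K: "is_band K" and Ke: "bproj K e = 0" and x: "x \<in> K"
  shows "x = 0"
proof (rule ccontr)
  assume "x \<noteq> 0"
  then have "0 < rabs x" using rabs_nonneg[of x] rabs_zero_iff[of x] by (simp add: order.strict_iff_order)
  then obtain y where y: "y \<in> X" "0 < y" "y \<le> rabs x" using X_dense by blast
  have yK: "y \<in> K" by (rule band_solid[OF K x]) (use y in \<open>simp add: rabs_pos\<close>)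
  have "e \<in> dcompl K" using bp_rest[OF K, of e] Ke by simp
  then have "disj e y" using yK unfolding dcompl_def by auto
  then have "inf (rabs y) e = 0" unfolding disj_def using e_pos by (simp add: rabs_pos inf.commute)
  then have "y = 0" using e_weak[OF y(1)] by simp
  then show False using y(2) by simp
qed

end




locale mt2 = mt X T e mult P
  for X :: "'u::dc_riesz_space set" and T e mult P +
  fixes B :: "'u set" and u :: 'u
  assumes B: "is_band B" and uD: "u \<in> dcompl B" and u0: "0 \<le> u"
    and sc: "sc_equiv X (series_rep (\<lambda>n. T (P n e))) (inftyB_plus_rep X B u)"
begin

abbreviation "D \<equiv> dcompl B"
abbreviation "PB \<equiv> bproj B"
abbreviation "PD \<equiv> bproj (dcompl B)"
abbreviation "A \<equiv> inftyB_plus_rep X B u"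

lemma Dband: "is_band D" by (rule dcompl_band)
lemma PD_eq: "PD x = x - PB x" by (rule bproj_dcompl[OF B])
lemma PB_X: "x \<in> X \<Longrightarrow> PB x \<in> X" using X_solid bp_rabs[OF B] by blast
lemma PD_X: "x \<in> X \<Longrightarrow> PD x \<in> X" using X_solid bp_rabs[OF Dband] by blast

lemma sc': "x \<in> X \<Longrightarrow> Sup ((\<lambda>a. inf x a) ` range S) = Sup ((\<lambda>c. inf x c) ` A)"
proof -
  assume x: "x \<in> X"
  have "series_rep (\<lambda>n. T (P n e)) = range S"
    unfolding series_rep_def S_def t_def p_def ..
  then show ?thesis using sc x unfolding sc_equiv_def by simp
qed

lemma A0: "0 \<in> A" unfolding inftyB_plus_rep_def using X_0 band_0[OF B] u0 by force

lemma A_bound: "x \<in> X \<Longrightarrow> Sup ((\<lambda>c. inf x c) ` A) \<le> PB x + u"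
proof -
  assume x: "x \<in> X"
  show ?thesis
  proof (rule cSup_least)
    show "(\<lambda>c. inf x c) ` A \<noteq> {}" using A0 by auto
    fix z assume "z \<in> (\<lambda>c. inf x c) ` A"
    then obtain b y where b: "b \<in> B" "0 \<le> b" and y: "y \<in> X" "0 \<le> y" "y \<le> u" and z: "z = inf x (b + y)"
      unfolding inftyB_plus_rep_def by auto
    have yD: "y \<in> D" by (rule band_pos_le[OF Dband uD y(2,3)])
    have "z = PB z + PD z" using PD_eq by simp
    moreover have "PB z \<le> PB x" unfolding z by (rule bp_mono[OF B]) simp
    moreover have "PD z \<le> PD (b + y)" unfolding z by (rule bp_mono[OF Dband]) simp
    moreover have "PD (b + y) = y"
      using bp_add[OF Dband, of b y] bp_id[OF Dband yD] bp_zero[OF Dband, of b] b(1)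
        ddcompl_band[OF B] by simp
    ultimately show "z \<le> PB x + u" using y(3) by (metis add_mono order_trans)
  qed
qed

lemma F_lower:
  assumes c: "0 \<le> c"
  shows "c *\<^sub>R PB e \<le> Sup ((\<lambda>a. inf (c *\<^sub>R e) a) ` range S)"
proof -
  have ceX: "c *\<^sub>R e \<in> X" by (rule X_scale[OF e_X])
  have PBe0: "0 \<le> PB e" by (rule bp_pos[OF B e_pos])
  have mem: "c *\<^sub>R PB e + 0 \<in> A"
    unfolding inftyB_plus_rep_def
    using X_scale[OF PB_X[OF e_X]] band_scale[OF B bp_in[OF B]] scaleR_nonneg_nonneg[OF c PBe0] X_0 u0
    by blast
  have le: "c *\<^sub>R PB e \<le> c *\<^sub>R e" by (rule scaleR_left_mono[OF bp_le_self[OF B e_pos] c])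
  have bdd: "bdd_above ((\<lambda>a. inf (c *\<^sub>R e) a) ` A)" by (rule bdd_aboveI[of _ "c *\<^sub>R e"]) auto
  have "c *\<^sub>R PB e = inf (c *\<^sub>R e) (c *\<^sub>R PB e + 0)" using le by (simp add: inf_absorb2)
  also have "\<dots> \<le> Sup ((\<lambda>a. inf (c *\<^sub>R e) a) ` A)" using mem bdd by (intro cSup_upper) auto
  also have "\<dots> = Sup ((\<lambda>a. inf (c *\<^sub>R e) a) ` range S)" using sc'[OF ceX] by simp
  finally show ?thesis .
qed

lemma PD_S: "PD (S N) \<le> u"
proof -
  have bdd: "bdd_above ((\<lambda>a. inf (S N) a) ` range S)" by (rule bdd_aboveI[of _ "S N"]) auto
  have "S N = inf (S N) (S N)" by simp
  also have "\<dots> \<le> Sup ((\<lambda>a. inf (S N) a) ` range S)"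
  proof -
    have mem: "inf (S N) (S N) \<in> (\<lambda>a. inf (S N) a) ` range S" by (rule imageI) (rule rangeI)
    show ?thesis by (rule cSup_upper[OF mem bdd])
  qed
  also have "\<dots> = Sup ((\<lambda>c. inf (S N) c) ` A)" by (rule sc'[OF S_X])
  also have "\<dots> \<le> PB (S N) + u" by (rule A_bound[OF S_X])
  finally show ?thesis unfolding PD_eq by (simp add: algebra_simps)
qed

definition Sig :: "real \<Rightarrow> 'u" where "Sig c = Sup (range (\<lambda>N. inf (c *\<^sub>R e) (S N)))"

lemma Sig_props:
  assumes c: "0 \<le> c"
  shows "Sig c \<in> X" "c *\<^sub>R PB e \<le> Sig c" "T (Sig c) \<le> Sig c" "PD (Sig c) \<le> u"
proof -
  have ce0: "0 \<le> c *\<^sub>R e" using c e_pos by (rule scaleR_nonneg_nonneg)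
  have ceX: "c *\<^sub>R e \<in> X" by (rule X_scale[OF e_X])
  define y where "y N = inf (c *\<^sub>R e) (S N)" for N
  have rng: "range (\<lambda>N. inf (c *\<^sub>R e) (S N)) = (\<lambda>a. inf (c *\<^sub>R e) a) ` range S" by auto
  have bdd: "bdd_above (range y)" unfolding y_def by (rule bdd_aboveI[of _ "c *\<^sub>R e"]) auto
  have y0: "0 \<le> y N" for N unfolding y_def using ce0 S_pos by simp
  have Sig_le: "Sig c \<le> c *\<^sub>R e" unfolding Sig_def by (rule cSup_least) auto
  have Sig0: "0 \<le> Sig c" unfolding Sig_def y_def[symmetric] using bdd y0[of 0] by (intro order_trans[OF _ cSup_upper]) auto
  show SX: "Sig c \<in> X" by (rule X_pos_le[OF ceX Sig0 Sig_le])
  show "c *\<^sub>R PB e \<le> Sig c" unfolding Sig_def rng by (rule F_lower[OF c])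
  have yX: "y N \<in> X" for N by (rule X_pos_le[OF ceX y0]) (simp add: y_def)
  have ymono: "y N \<le> y M" if "N \<le> M" for N M unfolding y_def using S_mono[OF that] by (rule inf_mono[OF order_refl])
  have yT: "T (y N) = y N" for N
    unfolding y_def by (rule TX_T[OF TX_inf[OF TX_scale[OF TX_e] S_TX]])
  have SigY: "Sig c = Sup (range y)" unfolding Sig_def y_def ..
  have SX': "Sup (range y) \<in> X" using SX unfolding SigY .
  have oc: "Inf (T ` range (\<lambda>N. Sup (range y) - y N)) = 0"
    by (rule OC_seq[OF ymono yX bdd SX'])
  have "T (Sig c) - Sig c \<le> 0"
  proof (rule below_Inf_zero[OF oc])
    show "range (\<lambda>N. Sup (range y) - y N) \<noteq> {}" by simp
    fix d assume "d \<in> range (\<lambda>N. Sup (range y) - y N)"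
    then obtain N where d: "d = Sig c - y N" unfolding SigY by auto
    have "y N \<le> Sig c" unfolding SigY using bdd by (intro cSup_upper) auto
    then have "T (Sig c) - Sig c \<le> T (Sig c) - y N" by simp
    also have "\<dots> = T d" unfolding d using T_diff[OF SX yX] yT by simp
    finally show "T (Sig c) - Sig c \<le> T d" .
  qed
  then show "T (Sig c) \<le> Sig c" by simp
  have "Sig c \<le> PB (c *\<^sub>R e) + u"
    unfolding Sig_def rng sc'[OF ceX] by (rule A_bound[OF ceX])
  then have "PD (Sig c) \<le> PD (PB (c *\<^sub>R e) + u)" by (rule bp_mono[OF Dband])
  also have "\<dots> = u"
    using bp_add[OF Dband] bp_id[OF Dband uD] bp_zero[OF Dband] bp_in[OF B] ddcompl_band[OF B] by simp
  finally show "PD (Sig c) \<le> u" .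
qed

lemma T_PBe: "T (PB e) = PB e"
proof -
  have PBeX: "PB e \<in> X" by (rule PB_X[OF e_X])
  have PBe0: "0 \<le> PB e" by (rule bp_pos[OF B e_pos])
  define k where "k = T (PB e)"
  have kX: "k \<in> X" unfolding k_def by (rule T_X[OF PBeX])
  have k0: "0 \<le> k" unfolding k_def by (rule T_pos[OF PBeX PBe0])
  define h where "h = PD k"
  have h0: "0 \<le> h" unfolding h_def by (rule bp_pos[OF Dband k0])
  have "real n *\<^sub>R h \<le> u" for n
  proof -
    have c: "0 \<le> real n" by simp
    have "real n *\<^sub>R PB e \<in> X" by (rule X_scale[OF PBeX])
    have "real n *\<^sub>R h = PD (T (real n *\<^sub>R PB e))"
      unfolding h_def k_def using T_scale[OF PBeX] bp_scale[OF Dband] by simp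
    also have "\<dots> \<le> PD (T (Sig (real n)))"
      by (rule bp_mono[OF Dband T_mono[OF X_scale[OF PBeX] Sig_props(1)[OF c] Sig_props(2)[OF c]]])
    also have "\<dots> \<le> PD (Sig (real n))" by (rule bp_mono[OF Dband Sig_props(3)[OF c]])
    also have "\<dots> \<le> u" by (rule Sig_props(4)[OF c])
    finally show ?thesis .
  qed
  then have "h = 0" using h0 archimedean_zero by blast
  then have kB: "PB k = k" unfolding h_def PD_eq by simp
  have "k \<le> e" unfolding k_def using T_mono[OF PBeX e_X bp_le_self[OF B e_pos]] T_e by simp
  then have "PB k \<le> PB e" by (rule bp_mono[OF B])
  then have kle: "k \<le> PB e" using kB by simp
  have "T (PB e - k) = 0" using T_diff[OF PBeX kX] T_idem[OF PBeX] unfolding k_def by simp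
  then have "PB e - k = 0" using T_strict0[OF X_diff[OF PBeX kX]] kle by simp
  then show ?thesis unfolding k_def by simp
qed

lemma comm: "x \<in> X \<Longrightarrow> PB (T x) = T (PB x)"
  by (rule T_comm[OF B T_PBe])

lemma T_band_B: "x \<in> X \<Longrightarrow> 0 \<le> x \<Longrightarrow> T (PB x) \<in> B"
  by (rule T_band[OF B _]) (simp add: T_PBe bp_in[OF B])

lemma T_band_D: "x \<in> X \<Longrightarrow> 0 \<le> x \<Longrightarrow> T (PD x) \<in> D"
proof (rule T_band[OF Dband])
  have "T (PD e) = e - PB e" unfolding PD_eq using T_diff[OF e_X PB_X[OF e_X]] T_e T_PBe by simp
  also have "\<dots> = PD e" unfolding PD_eq ..
  finally show "T (PD e) \<in> D" using bp_in[OF Dband] by simp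
qed

end




context mt2
begin

lemma mult_scaleR: "mult x (c *\<^sub>R y) = c *\<^sub>R mult x y"
  using falg unfolding f_algebra_unit_def by simp

lemma mult_band:
  assumes gB: "g \<in> B" and g0: "0 \<le> g"
  shows "mult g (PD e) = 0"
proof -
  define w where "w = mult g (PD e)"
  have PDe0: "0 \<le> PD e" by (rule bp_pos[OF Dband e_pos])
  have w0: "0 \<le> w" unfolding w_def by (rule mult_pos[OF g0 PDe0])
  have PDw0: "0 \<le> PD w" by (rule bp_pos[OF Dband w0])
  have PBw0: "0 \<le> PB w" by (rule bp_pos[OF B w0])
  have "disj (PD w) g" using bp_in[OF Dband, of w] gB unfolding dcompl_def by auto
  then have "inf g (PD w) = 0" using disj_pos[OF g0 PDw0] disj_sym by auto
  then have 1: "inf w (PD w) = 0" unfolding w_def using mult_disj[OF _ PDe0] by blast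
  have "disj (PD e) (PB w)" using bp_in[OF Dband, of e] bp_in[OF B, of w] unfolding dcompl_def by auto
  then have "inf (PD e) (PB w) = 0" using disj_pos[OF PDe0 PBw0] by auto
  then have 2: "inf w (PB w) = 0" unfolding w_def using mult_disj[OF _ g0] by blast
  have "PD w = 0" using 1 bp_le_self[OF Dband w0] by (simp add: inf_absorb2)
  moreover have "PB w = 0" using 2 bp_le_self[OF B w0] by (simp add: inf_absorb2)
  moreover have "w = PB w + PD w" unfolding PD_eq by simp
  ultimately have "w = 0" by simp
  then show ?thesis unfolding w_def .
qed

lemma mult_PBe: "g \<in> B \<Longrightarrow> 0 \<le> g \<Longrightarrow> mult g (PB e) = g"
  using mult_band[of g] mult_diffR[of g e "PB e"] mult_eR[of g] unfolding PD_eq by simp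

definition G :: "nat \<Rightarrow> 'u set" where "G n = dcompl (dcompl (\<Union>k\<in>{n..}. CC k))"

lemma G_band: "is_band (G n)" unfolding G_def by (rule dcompl_band)
lemma CC_G: "n \<le> k \<Longrightarrow> CC k \<subseteq> G n"
  unfolding G_def using subset_ddcompl[of "\<Union>k\<in>{n..}. CC k"] by auto

lemma Q_eq: "x - P i x = bproj (dcompl (CC i)) x"
  using bproj_dcompl[OF CC(1)] CC(2) by simp

lemma T_Qe: "T (e - P i e) = e - t i"
  using T_diff[OF e_X p_X] T_e unfolding t_def p_def by simp

lemma foldr_Q:
  fixes w :: 'u
  assumes w: "0 \<le> w" "w \<le> e" "\<And>k. k \<in> set is \<Longrightarrow> w \<in> dcompl (CC k)"
  shows "w \<le> foldr (\<lambda>i f. (\<lambda>x. x - P i x) \<circ> f) is id e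
    \<and> 0 \<le> foldr (\<lambda>i f. (\<lambda>x. x - P i x) \<circ> f) is id e
    \<and> foldr (\<lambda>i f. (\<lambda>x. x - P i x) \<circ> f) is id e \<le> e"
  using w(3)
proof (induction "is")
  case Nil
  then show ?case using w e_pos by simp
next
  case (Cons i js)
  define F where "F = foldr (\<lambda>i f. (\<lambda>x. x - P i x) \<circ> f) js id e"
  have IH: "w \<le> F \<and> 0 \<le> F \<and> F \<le> e" unfolding F_def by (rule Cons.IH) (use Cons.prems in simp)
  then have F: "w \<le> F" "0 \<le> F" "F \<le> e" by auto
  have eq: "foldr (\<lambda>i f. (\<lambda>x. x - P i x) \<circ> f) (i # js) id e = bproj (dcompl (CC i)) F"
    unfolding F_def by (simp add: Q_eq)
  have Ci: "is_band (dcompl (CC i))" by (rule dcompl_band)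
  have wi: "w \<in> dcompl (CC i)" using Cons by simp
  have "w = bproj (dcompl (CC i)) w" using bp_id[OF Ci wi] by simp
  also have "\<dots> \<le> bproj (dcompl (CC i)) F" by (rule bp_mono[OF Ci F(1)])
  finally have 1: "w \<le> bproj (dcompl (CC i)) F" .
  have 2: "0 \<le> bproj (dcompl (CC i)) F" by (rule bp_pos[OF Ci F(2)])
  have 3: "bproj (dcompl (CC i)) F \<le> e" using bp_le_self[OF Ci F(2)] F(3) by simp
  show ?case unfolding eq using 1 2 3 by simp
qed

lemma indep_Q:
  assumes "distinct is" "is \<noteq> []"
  shows "T (foldr (\<lambda>i f. (\<lambda>x. x - P i x) \<circ> f) is id e) = foldr (\<lambda>i a. mult (e - t i) a) is e"
proof -
  have "T (foldr (\<lambda>i f. (\<lambda>x. x - P i x) \<circ> f) is id e) = foldr (\<lambda>i a. mult (T (e - P i e)) a) is e"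
    using ind assms unfolding T_indep_def Let_def by (drule_tac x = "is" in spec, drule_tac x = "\<lambda>_. False" in spec) simp
  also have "\<dots> = foldr (\<lambda>i a. mult (e - t i) a) is e" by (simp only: T_Qe)
  finally show ?thesis .
qed

lemma B_sub_G: "B \<subseteq> G n"
proof -
  define K where "K = B \<inter> dcompl (G n)"
  have K: "is_band K" unfolding K_def by (rule band_inter[OF B dcompl_band])
  define w where "w = bproj K e"
  have w0: "0 \<le> w" unfolding w_def by (rule bp_pos[OF K e_pos])
  have we: "w \<le> e" unfolding w_def by (rule bp_le_self[OF K e_pos])
  have wK: "w \<in> K" unfolding w_def by (rule bp_in[OF K])
  have wX: "w \<in> X" by (rule X_pos_le[OF e_X w0 we])
  have wB: "w \<in> B" using wK unfolding K_def by simp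
  have wC: "w \<in> dcompl (CC k)" if "n \<le> k" for k
    using wK dcompl_mono[OF CC_G[OF that]] unfolding K_def by auto
  define g where "g = T w"
  have gB: "g \<in> B" unfolding g_def using T_band_B[OF wX w0] bp_id[OF B wB] by simp
  have g0: "0 \<le> g" unfolding g_def by (rule T_pos[OF wX w0])
  have ge: "g \<le> e" unfolding g_def using T_mono[OF wX e_X we] T_e by simp
  have multS: "mult g (S N) \<le> S n + e" for N
  proof (cases "n < N")
    case False
    then have "mult g (S N) \<le> S N" by (intro mult_le_id[OF ge S_pos])
    also have "\<dots> \<le> S n" using False by (intro S_mono) simp
    finally show ?thesis using e_pos by (simp add: add_increasing2)
  next
    case True
    define "is" where "is = [n..<N]"
    have isd: "distinct is" "is \<noteq> []" unfolding is_def using True by auto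
    have isn: "k \<in> set is \<Longrightarrow> w \<in> dcompl (CC k)" for k unfolding is_def using wC by auto
    define F where "F = foldr (\<lambda>i f. (\<lambda>x. x - P i x) \<circ> f) is id e"
    define \<pi> where "\<pi> = foldr (\<lambda>i a. mult (e - t i) a) is e"
    have F: "w \<le> F" "0 \<le> F" "F \<le> e" using foldr_Q[OF w0 we isn] unfolding F_def by auto
    have FX: "F \<in> X" by (rule X_pos_le[OF e_X F(2,3)])
    have "g \<le> T F" unfolding g_def by (rule T_mono[OF wX FX F(1)])
    also have "T F = \<pi>" unfolding F_def \<pi>_def by (rule indep_Q[OF isd])
    finally have g\<pi>: "g \<le> \<pi>" .
    have sumeq: "sum_list (map t is) = sum t {n..<N}" unfolding is_def
      by (simp add: sum_set_upt_conv_sum_list_nat[symmetric])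
    have pb: "mult \<pi> (e + sum_list (map t is)) \<le> e"
      using prod_bound[of t "is"] t_pos t_le unfolding \<pi>_def by blast
    have s0: "0 \<le> e + sum t {n..<N}" using e_pos by (simp add: sum_nonneg t_pos add_nonneg_nonneg)
    have "mult g (e + sum t {n..<N}) \<le> mult \<pi> (e + sum t {n..<N})"
      by (rule mult_monoL[OF s0 g\<pi>])
    also have "\<dots> \<le> e" using pb sumeq by simp
    finally have "g + mult g (sum t {n..<N}) \<le> e" by (simp add: mult_addR mult_eR)
    then have m1: "mult g (sum t {n..<N}) \<le> e" using g0 by (metis add_le_cancel_left add_increasing order_trans order_refl le_add_same_cancel2)
    have "mult g (S N) = mult g (S n) + mult g (sum t {n..<N})"
      using S_split[of n N] True by (simp add: mult_addR)
    also have "\<dots> \<le> S n + e" by (rule add_mono[OF mult_le_id[OF ge S_pos] m1])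
    finally show ?thesis .
  qed
  have cg: "real c *\<^sub>R g \<le> S n + e" for c :: nat
  proof -
    define a where "a = real c *\<^sub>R PB e"
    have rc: "0 \<le> real c" by simp
    define y where "y N = inf a (S N)" for N
    have ya: "y N \<le> a" for N unfolding y_def by simp
    have "real c *\<^sub>R g = mult g a" unfolding a_def mult_scaleR mult_PBe[OF gB g0] ..
    have key: "y N \<le> a - (real c *\<^sub>R g - (S n + e))" for N
    proof -
      have "mult g a = mult g (y N) + mult g (a - y N)" by (simp add: mult_addR[symmetric])
      also have "\<dots> \<le> S n + e + (a - y N)"
      proof (rule add_mono)
        have "mult g (y N) \<le> mult g (S N)" by (rule mult_monoR[OF g0]) (simp add: y_def)
        then show "mult g (y N) \<le> S n + e" using multS[of N] by simp
        show "mult g (a - y N) \<le> a - y N" by (rule mult_le_id[OF ge]) (simp add: ya)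
      qed
      finally have "mult g a \<le> S n + e + (a - y N)" .
      then show ?thesis using \<open>real c *\<^sub>R g = mult g a\<close> by (simp add: algebra_simps)
    qed
    have bddS: "bdd_above (range (\<lambda>N. inf (real c *\<^sub>R e) (S N)))"
      by (rule bdd_aboveI[of _ "real c *\<^sub>R e"]) auto
    have ale: "a \<le> real c *\<^sub>R e" unfolding a_def by (rule scaleR_left_mono[OF bp_le_self[OF B e_pos] rc])
    have yeq: "y N = inf a (inf (real c *\<^sub>R e) (S N))" for N
      unfolding y_def using ale by (simp add: inf_assoc[symmetric] inf_absorb1)
    have "Sup (range y) = inf a (Sup (range (\<lambda>N. inf (real c *\<^sub>R e) (S N))))"
      unfolding yeq using inf_Sup_distrib[OF _ bddS, of a] by (simp add: image_image)
    also have "\<dots> = a"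
    proof -
      have "a \<le> Sup (range (\<lambda>N. inf (real c *\<^sub>R e) (S N)))"
        unfolding a_def using F_lower[OF rc] by (simp add: image_image)
      then show ?thesis by (simp add: inf_absorb1)
    qed
    finally have Sy: "Sup (range y) = a" .
    have "Sup (range y) \<le> a - (real c *\<^sub>R g - (S n + e))"
      by (rule cSup_least) (auto intro: key)
    then show ?thesis unfolding Sy by simp
  qed
  have "g = 0" by (rule archimedean_zero[OF g0 cg])
  then have "w = 0" unfolding g_def using T_strict0[OF wX w0] by simp
  then have Kz: "x = 0" if "x \<in> K" for x using K_zero[OF K _ that] unfolding w_def by simp
  show ?thesis
  proof
    fix x assume xB: "x \<in> B"
    have Gn: "is_band (G n)" by (rule G_band)
    have "bproj (dcompl (G n)) x = bproj (dcompl (G n)) (PB x)" using bp_id[OF B xB] by simp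
    also have "\<dots> = bproj (dcompl (G n) \<inter> B) x" by (rule bp_comp[OF dcompl_band B])
    also have "\<dots> = 0"
    proof -
      have "dcompl (G n) \<inter> B = K" unfolding K_def by auto
      then show ?thesis using Kz bp_in[OF K] by simp
    qed
    finally have "x - bproj (G n) x = 0" using bproj_dcompl[OF Gn] by simp
    then show "x \<in> G n" using bp_in[OF Gn, of x] by simp
  qed
qed

end




context mt2
begin

primrec rr :: "nat \<Rightarrow> nat \<Rightarrow> 'u" where
  "rr n 0 = 0"
| "rr n (Suc m) = (if n \<le> m then sup (rr n m) (p m) else rr n m)"

lemma sup_le_add: "0 \<le> a \<Longrightarrow> 0 \<le> b \<Longrightarrow> sup a (b::'u) \<le> a + b"
  by (auto intro: sup_least add_increasing add_increasing2)

lemma rr_pos: "0 \<le> rr n m"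
  by (induction m) (auto intro: le_supI1)

lemma rr_le_e: "rr n m \<le> e"
  by (induction m) (auto simp: e_pos p_le)

lemma rr_X: "rr n m \<in> X" by (rule X_pos_le[OF e_X rr_pos rr_le_e])

lemma rr_mono: "m \<le> m' \<Longrightarrow> rr n m \<le> rr n m'"
  by (rule lift_Suc_mono_le[of "rr n"]) auto

lemma rr_G: "rr n m \<in> G n"
proof (induction m)
  case 0 then show ?case using band_0[OF G_band] by simp
next
  case (Suc m)
  show ?case
  proof (cases "n \<le> m")
    case True
    have pG: "p m \<in> G n" using p_C CC_G[OF True] by auto
    have "sup (rr n m) (p m) \<in> G n"
      by (rule band_pos_le[OF G_band band_add[OF G_band Suc pG]])
        (auto intro: le_supI1 rr_pos sup_le_add p_pos)
    then show ?thesis using True by simp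
  qed (use Suc in simp)
qed

lemma rr_sum: "rr n m \<le> sum p {n..<m}"
proof (induction m)
  case 0 then show ?case by simp
next
  case (Suc m)
  show ?case
  proof (cases "n \<le> m")
    case True
    have "sup (rr n m) (p m) \<le> rr n m + p m" by (rule sup_le_add[OF rr_pos p_pos])
    also have "\<dots> \<le> sum p {n..<m} + p m" using Suc by simp
    also have "\<dots> = sum p {n..<Suc m}" using True by simp
    finally show ?thesis using True by simp
  next
    case False
    then show ?thesis using Suc by simp
  qed
qed

lemma rr_p: "n \<le> k \<Longrightarrow> p k \<le> rr n (Suc k)"
  by simp

lemma E_sub_B:
  assumes E: "is_band E" and EG: "\<And>n. E \<subseteq> G n"
  shows "E \<subseteq> B"
proof -
  define K where "K = E \<inter> D"
  have K: "is_band K" unfolding K_def by (rule band_inter[OF E Dband])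
  define v where "v = bproj K e"
  have v0: "0 \<le> v" unfolding v_def by (rule bp_pos[OF K e_pos])
  have ve: "v \<le> e" unfolding v_def by (rule bp_le_self[OF K e_pos])
  have vK: "v \<in> K" unfolding v_def by (rule bp_in[OF K])
  have vX: "v \<in> X" by (rule X_pos_le[OF e_X v0 ve])
  have vD: "v \<in> D" using vK unfolding K_def by simp
  have vG: "v \<in> G n" for n using vK EG unfolding K_def by auto
  define g where "g = T v"
  have gD: "g \<in> D" unfolding g_def using T_band_D[OF vX v0] bp_id[OF Dband vD] by simp
  have g0: "0 \<le> g" unfolding g_def by (rule T_pos[OF vX v0])
  have bddS: "bdd_above (range (\<lambda>N. PD (S N)))" by (rule bdd_aboveI[of _ u]) (auto intro: PD_S)
  define \<sigma> where "\<sigma> = Sup (range (\<lambda>N. PD (S N)))"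
  have PDS\<sigma>: "PD (S N) \<le> \<sigma>" for N unfolding \<sigma>_def using bddS by (intro cSup_upper) auto
  have main: "PD (S n) \<le> \<sigma> - g" for n
  proof -
    define \<rho> where "\<rho> = Sup (range (rr n))"
    have bddr: "bdd_above (range (rr n))" by (rule bdd_aboveI[of _ e]) (auto intro: rr_le_e)
    have rr\<rho>: "rr n m \<le> \<rho>" for m unfolding \<rho>_def using bddr by (intro cSup_upper) auto
    have \<rho>e: "\<rho> \<le> e" unfolding \<rho>_def by (rule cSup_least) (auto intro: rr_le_e)
    have \<rho>0: "0 \<le> \<rho>" using rr\<rho>[of 0] by simp
    have \<rho>X: "\<rho> \<in> X" by (rule X_pos_le[OF e_X \<rho>0 \<rho>e])
    have \<rho>G: "\<rho> \<in> G n" unfolding \<rho>_def by (rule band_Sup[OF G_band]) (auto intro: rr_G bddr)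
    have rest: "e - \<rho> \<in> dcompl (G n)"
    proof -
      have "e - \<rho> \<in> dcompl (CC k)" if k: "n \<le> k" for k
      proof -
        have Ck: "is_band (CC k)" by (rule CC(1))
        have pk\<rho>: "p k \<le> \<rho>" using rr_p[OF k] rr\<rho>[of "Suc k"] by (rule order_trans)
        have "p k = bproj (CC k) (p k)" using bp_id[OF Ck p_C] by simp
        also have "\<dots> \<le> bproj (CC k) \<rho>" by (rule bp_mono[OF Ck pk\<rho>])
        finally have 1: "p k \<le> bproj (CC k) \<rho>" .
        have 2: "bproj (CC k) \<rho> \<le> p k" unfolding p_eq by (rule bp_mono[OF Ck \<rho>e])
        have "bproj (CC k) (e - \<rho>) = 0"
          using 1 2 bp_diff[OF Ck, of e \<rho>] unfolding p_eq by simp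
        then show ?thesis using bp_rest[OF Ck, of "e - \<rho>"] by simp
      qed
      then have "e - \<rho> \<in> dcompl (\<Union>k\<in>{n..}. CC k)" unfolding dcompl_def by auto
      then show ?thesis unfolding G_def dcompl_ddd .
    qed
    have PGe: "bproj (G n) e = \<rho>" using bp_decomp[OF G_band \<rho>G rest] by simp
    have "v = bproj (G n) v" using bp_id[OF G_band vG] by simp
    also have "\<dots> \<le> bproj (G n) e" by (rule bp_mono[OF G_band ve])
    finally have v\<rho>: "v \<le> \<rho>" unfolding PGe .
    have gT: "g \<le> T \<rho>" unfolding g_def by (rule T_mono[OF vX \<rho>X v\<rho>])
    have \<rho>X': "Sup (range (rr n)) \<in> X" using \<rho>X unfolding \<rho>_def .
    have oc: "Inf (T ` range (\<lambda>m. Sup (range (rr n)) - rr n m)) = 0"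
      by (rule OC_seq[OF rr_mono rr_X bddr \<rho>X'])
    have "g - (\<sigma> - PD (S n)) \<le> 0"
    proof (rule below_Inf_zero[OF oc])
      show "range (\<lambda>m. Sup (range (rr n)) - rr n m) \<noteq> {}" by simp
      fix d assume "d \<in> range (\<lambda>m. Sup (range (rr n)) - rr n m)"
      then obtain m where d: "d = \<rho> - rr n m" unfolding \<rho>_def by auto
      have dX: "d \<in> X" unfolding d by (rule X_diff[OF \<rho>X rr_X])
      have d0: "0 \<le> d" unfolding d using rr\<rho>[of m] by simp
      have Td0: "0 \<le> T d" by (rule T_pos[OF dX d0])
      have sumX: "sum p {n..<m} \<in> X" by (rule X_sum) (rule p_X)
      have "PD (T (rr n m)) \<le> PD (T (sum p {n..<m}))"
        by (rule bp_mono[OF Dband T_mono[OF rr_X sumX rr_sum]])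
      also have "T (sum p {n..<m}) = sum t {n..<m}" unfolding t_def by (rule T_sum) (rule p_X)
      also have "sum t {n..<m} = S (max n m) - S n"
      proof -
        have "{n..<m} = {n..<max n m}" by auto
        then show ?thesis using S_split[of n "max n m"] by simp
      qed
      also have "PD (S (max n m) - S n) = PD (S (max n m)) - PD (S n)" by (rule bp_diff[OF Dband])
      also have "\<dots> \<le> \<sigma> - PD (S n)" using PDS\<sigma>[of "max n m"] by simp
      finally have 1: "PD (T (rr n m)) \<le> \<sigma> - PD (S n)" .
      have "\<rho> = rr n m + d" unfolding d by simp
      then have "T \<rho> = T (rr n m) + T d" using T_add[OF rr_X[of n m] dX] by simp
      then have "PD (T \<rho>) = PD (T (rr n m)) + PD (T d)" using bp_add[OF Dband] by simp
      also have "\<dots> \<le> (\<sigma> - PD (S n)) + T d" by (rule add_mono[OF 1 bp_le_self[OF Dband Td0]])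
      finally have 2: "PD (T \<rho>) \<le> (\<sigma> - PD (S n)) + T d" .
      have "g = PD g" using bp_id[OF Dband gD] by simp
      also have "\<dots> \<le> PD (T \<rho>)" by (rule bp_mono[OF Dband gT])
      finally have "g \<le> (\<sigma> - PD (S n)) + T d" using 2 by simp
      then show "g - (\<sigma> - PD (S n)) \<le> T d" by (simp add: algebra_simps)
    qed
    then show ?thesis by (simp add: algebra_simps)
  qed
  have "\<sigma> \<le> \<sigma> - g" unfolding \<sigma>_def by (rule cSup_least) (auto intro: main[unfolded \<sigma>_def])
  then have "g = 0" using g0 by simp
  then have "v = 0" unfolding g_def using T_strict0[OF vX v0] by simp
  then have Kz: "x = 0" if "x \<in> K" for x using K_zero[OF K _ that] unfolding v_def by simp
  show ?thesis
  proof
    fix x assume xE: "x \<in> E"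
    have "PD x = PD (bproj E x)" using bp_id[OF E xE] by simp
    also have "\<dots> = bproj (D \<inter> E) x" by (rule bp_comp[OF Dband E])
    also have "\<dots> = 0"
    proof -
      have "D \<inter> E = K" unfolding K_def by auto
      then show ?thesis using Kz bp_in[OF K] by simp
    qed
    finally have "x - PB x = 0" unfolding PD_eq .
    then show "x \<in> B" using bp_in[OF B, of x] by simp
  qed
qed

lemma limsup_eq: "bp_limsup P = PB"
proof -
  have set_eq: "{P k | k. n \<le> k} = (\<lambda>k. bproj (CC k)) ` {n..}" for n
    using CC(2) by auto
  have sup_eq: "bp_Sup {P k | k. n \<le> k} = bproj (G n)" for n
    unfolding set_eq G_def by (rule bp_Sup_eq) (rule CC(1))
  have "bp_limsup P = bp_Inf (range (\<lambda>n. bproj (G n)))"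
    unfolding bp_limsup_def sup_eq ..
  also have "\<dots> = PB"
  proof (rule bp_Inf_eq[OF B])
    fix Q assume "Q \<in> range (\<lambda>n. bproj (G n))"
    then obtain n where Q: "Q = bproj (G n)" by auto
    show "band_proj Q" unfolding Q band_proj_iff using G_band by blast
    show "bp_le PB Q" unfolding Q using bp_le_iff[OF B G_band] B_sub_G by simp
  next
    fix E :: "'u set" assume E: "is_band E" and le: "\<forall>Q\<in>range (\<lambda>n. bproj (G n)). bp_le (bproj E) Q"
    have "E \<subseteq> G n" for n using le bp_le_iff[OF E G_band] by auto
    then show "E \<subseteq> B" by (rule E_sub_B[OF E])
  qed
  finally show ?thesis .
qed

end




theorem mainTheorem3:
  fixes X :: "'u::dc_riesz_space set"
    and T :: "'u \<Rightarrow> 'u"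
    and e :: 'u
    and mult :: "'u \<Rightarrow> 'u \<Rightarrow> 'u"
    and P :: "nat \<Rightarrow> 'u \<Rightarrow> 'u"
  assumes uc: "is_universal_completion_of X"
    and unit: "weak_order_unit X e"
    and falg: "f_algebra_unit mult e"
    and ce: "cond_exp X T e"
    and Tuc: "T_univ_complete X T"
    and bp: "\<And>n. band_proj (P n)"
    and ind: "T_indep T mult e P"
  shows "(\<forall>B u. is_band B \<and> u \<in> dcompl B \<and> 0 \<le> u
            \<and> sc_equiv X (series_rep (\<lambda>n. T (P n e))) (inftyB_plus_rep X B u) \<longrightarrow>
            (\<forall>x\<in>X. bproj B (T x) = T (bproj B x)) \<and> bproj B = bp_limsup P)
       \<and> (sc_equiv X (series_rep (\<lambda>n. T (P n e))) (infty_rep X) \<longrightarrow> bp_limsup P = id)"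
proof -
  have M: "mt X T e mult P" unfolding mt_def using uc unit falg ce bp ind by blast
  have part1: "(\<forall>x\<in>X. bproj B (T x) = T (bproj B x)) \<and> bproj B = bp_limsup P"
    if B: "is_band B" and uD: "u \<in> dcompl B" and u0: "0 \<le> u"
      and sc: "sc_equiv X (series_rep (\<lambda>n. T (P n e))) (inftyB_plus_rep X B u)" for B u
  proof -
    have "mt2 X T e mult P B u" unfolding mt2_def mt2_axioms_def using M B uD u0 sc by blast
    then show ?thesis using mt2.comm mt2.limsup_eq by metis
  qed
  have part2: "bp_limsup P = id" if sc: "sc_equiv X (series_rep (\<lambda>n. T (P n e))) (infty_rep X)"
  proof -
    have X0: "0 \<in> X" using mt.X_0[OF M] .
    have eq: "inftyB_plus_rep X UNIV 0 = infty_rep X"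
      unfolding inftyB_plus_rep_def infty_rep_def using X0 by force
    have u: "(0::'u) \<in> dcompl UNIV" unfolding dcompl_def using disj_0 by blast
    have "bproj (UNIV::'u set) = bp_limsup P"
      using part1[OF band_UNIV u order_refl] sc eq by simp
    moreover have "bproj (UNIV::'u set) = id" by (rule bproj_UNIV)
    ultimately show ?thesis by simp
  qed
  show ?thesis using part1 part2 by blast
qed


end
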